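(* Let $Q\in N_n$ be a subpermutation and $A\in QU_n$, and let $A^\infty$ be the Belitskii canonical form of $A$ under $B_n$-similarity. Then $A^\infty\in QU_n$, and there exist finitely many elementary $U_n$-similarity operations $\mathcal O_1,\dots,\mathcal O_m$ such that, with $A_0=A$ and $A_k=\mathcal O_k(A_{k-1})$, all of $A_0,\dots,A_m$ lie in $QU_n$ and $A_m=DA^\infty D^{-1}$ for some invertible diagonal matrix $D$ (i.e. $A_m$ is $D_n$-similar to $A^\infty$).
   Context: $\mathbb F$ is a field. $B_n$ (resp. $U_n$, $N_n$, $D_n$) denotes the set of $n\times n$ invertible upper triangular (resp. upper triangular with all diagonal entries $1$, strictly upper triangular, invertible diagonal) matrices over $\mathbb F$; $QU_n=\{QU:U\in U_n\}$; $E_{ij}$ is the matrix unit. A subpermutation is a matrix each of whose rows and columns has at most one nonzero entry, and that entry equals $1$. An elementary $U_n$-similarity operation is a map $\mathcal O_{p,q}^\lambda:N_n\to N_n$, $\mathcal O_{p,q}^\lambda(X)=(I_n+\lambda E_{pq})X(I_n+\lambda E_{pq})^{-1}$, for some $\lambda\in\mathbb F$ and $1\le p<q\le n$. Matrices $X,Y$ are $G$-similar if $Y=BXB^{-1}$ for some $B\in G$. Belitskii order on positions $\{(i,j):1\le i<j\le n\}$: $(i,j)\prec(i',j')$ iff $i>i'$, or $i=i'$ and $j<j'$. Belitskii's algorithm for $B_n$-similarity on $N_n$: given $A\in N_n$ put $A^{(0)}=A$, $G^{(0)}=B_n$. For $k=0,1,\dots$, let $(p,q)$ be the $(k+1)$th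 position in Belitskii order and look at the $(p,q)$ entries of all matrices $G^{(k)}$-similar to $A^{(k)}$: (a) if this entry is always $0$ or can take every value of $\mathbb F$, choose $A^{(k+1)}$ $G^{(k)}$-similar to $A^{(k)}$ with that entry $0$; (b) if it takes exactly the values of $\mathbb F\setminus\{0\}$, choose $A^{(k+1)}$ with that entry $1$; (c) otherwise it is a constant $\lambda\ne0$ and $A^{(k+1)}=A^{(k)}$. $G^{(k+1)}$ is the subgroup of $g\in G^{(k)}$ such that $gA^{(k+1)}g^{-1}$ agrees with $A^{(k+1)}$ in the first $k+1$ positions. The final matrix $A^\infty$ is the Belitskii canonical form of $A$. *)

theory Defs
  imports "Jordan_Normal_Form.Matrix"
begin

text \<open>Matrices are n x n JNF matrices over a field; indices are 0-based (0..n-1).\<close>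

definition strict_upper :: "nat \<Rightarrow> 'a::field mat set" where
  "strict_upper n = {A \<in> carrier_mat n n. \<forall>i<n. \<forall>j<n. j \<le> i \<longrightarrow> A $$ (i,j) = 0}"

definition unitri :: "nat \<Rightarrow> 'a::field mat set" where
  "unitri n = {U \<in> carrier_mat n n. (\<forall>i<n. \<forall>j<n. j < i \<longrightarrow> U $$ (i,j) = 0)
                  \<and> (\<forall>i<n. U $$ (i,i) = 1)}"

definition borel :: "nat \<Rightarrow> 'a::field mat set" where
  "borel n = {B \<in> carrier_mat n n. (\<forall>i<n. \<forall>j<n. j < i \<longrightarrow> B $$ (i,j) = 0)
                  \<and> (\<forall>i<n. B $$ (i,i) \<noteq> 0)}"

definition diag_inv :: "nat \<Rightarrow> 'a::field mat set" where
  "diag_inv n = {D \<in> carrier_mat n n. (\<forall>i<n. \<forall>j<n. i \<noteq> j \<longrightarrow> D $$ (i,j) = 0)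
                  \<and> (\<forall>i<n. D $$ (i,i) \<noteq> 0)}"

definition QU :: "nat \<Rightarrow> 'a::field mat \<Rightarrow> 'a mat set" where
  "QU n Q = {Q * U | U. U \<in> unitri n}"

definition subpermutation :: "nat \<Rightarrow> 'a::field mat \<Rightarrow> bool" where
  "subpermutation n Q \<longleftrightarrow> Q \<in> carrier_mat n n
     \<and> (\<forall>i<n. \<forall>j<n. Q $$ (i,j) = 0 \<or> Q $$ (i,j) = 1)
     \<and> (\<forall>i<n. \<forall>j<n. \<forall>j'<n. Q $$ (i,j) \<noteq> 0 \<longrightarrow> Q $$ (i,j') \<noteq> 0 \<longrightarrow> j = j')
     \<and> (\<forall>i<n. \<forall>i'<n. \<forall>j<n. Q $$ (i,j) \<noteq> 0 \<longrightarrow> Q $$ (i',j) \<noteq> 0 \<longrightarrow> i = i')"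

definition unit_mat_pq :: "nat \<Rightarrow> nat \<Rightarrow> nat \<Rightarrow> 'a::field mat" where
  "unit_mat_pq n p q = mat n n (\<lambda>(i,j). if i = p \<and> j = q then 1 else 0)"

text \<open>Elementary U_n-similarity operation O_{p,q}^\<lambda>; for p<q the matrix
  I - \<lambda> E_pq is the inverse of I + \<lambda> E_pq.\<close>
definition elem_op :: "nat \<Rightarrow> nat \<Rightarrow> nat \<Rightarrow> 'a::field \<Rightarrow> 'a mat \<Rightarrow> 'a mat" where
  "elem_op n p q c X = (1\<^sub>m n + c \<cdot>\<^sub>m unit_mat_pq n p q) * X * (1\<^sub>m n - c \<cdot>\<^sub>m unit_mat_pq n p q)"

definition sim_by :: "nat \<Rightarrow> 'a::field mat set \<Rightarrow> 'a mat \<Rightarrow> 'a mat \<Rightarrow> bool" where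
  "sim_by n G X Y \<longleftrightarrow> (\<exists>g\<in>G. \<exists>gi \<in> carrier_mat n n.
       g * gi = 1\<^sub>m n \<and> gi * g = 1\<^sub>m n \<and> Y = g * X * gi)"

text \<open>Belitskii order on positions (i,j), i<j (0-based): larger row first,
  within a row increasing column.\<close>
definition belitskii_positions :: "nat \<Rightarrow> (nat \<times> nat) list" where
  "belitskii_positions n = concat (map (\<lambda>i. map (\<lambda>j. (i,j)) [Suc i..<n]) (rev [0..<n]))"

definition belitskii_run :: "nat \<Rightarrow> 'a::field mat \<Rightarrow> (nat \<Rightarrow> 'a mat) \<Rightarrow> (nat \<Rightarrow> 'a mat set) \<Rightarrow> bool" where
  "belitskii_run n A As Gs \<longleftrightarrow>
     As 0 = A \<and> Gs 0 = borel n \<and>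
     (\<forall>k < length (belitskii_positions n).
        let (p,q) = belitskii_positions n ! k;
            vals = {Y $$ (p,q) | Y. sim_by n (Gs k) (As k) Y}
        in (if vals = {0} \<or> vals = UNIV then
              sim_by n (Gs k) (As k) (As (Suc k)) \<and> As (Suc k) $$ (p,q) = 0
            else if vals = UNIV - {0} then
              sim_by n (Gs k) (As k) (As (Suc k)) \<and> As (Suc k) $$ (p,q) = 1
            else As (Suc k) = As k)
           \<and> Gs (Suc k) = {g \<in> Gs k. \<exists>gi \<in> carrier_mat n n. g * gi = 1\<^sub>m n \<and> gi * g = 1\<^sub>m n \<and>
                 (\<forall>m \<le> k. let (i,j) = belitskii_positions n ! m in
                     (g * As (Suc k) * gi) $$ (i,j) = As (Suc k) $$ (i,j))})"

text \<open>B is a Belitskii canonical form of A: the final matrix of some run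
  (the form is unique, by Belitskii's theorem).\<close>
definition belitskii_form :: "nat \<Rightarrow> 'a::field mat \<Rightarrow> 'a mat \<Rightarrow> bool" where
  "belitskii_form n A B \<longleftrightarrow>
     (\<exists>As Gs. belitskii_run n A As Gs \<and> B = As (length (belitskii_positions n)))"

end

theory Submission
  imports Defs
begin


lemma mult_ent:
  assumes "A \<in> carrier_mat n n" "B \<in> carrier_mat n n" "i < n" "j < n"
  shows "(A*B)$$(i,j) = (\<Sum>l<n. A$$(i,l) * B$$(l,j))"
  using assms by (auto simp: scalar_prod_def lessThan_atLeast0 intro!: sum.cong)

lemma sum_single:
  assumes "finite S" "a \<in> S" "\<And>x. x \<in> S \<Longrightarrow> x \<noteq> a \<Longrightarrow> f x = 0"
  shows "sum f S = f a"
proof -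
  have "sum f S = f a + sum f (S - {a})" using assms by (simp add: sum.remove)
  also have "sum f (S - {a}) = 0" using assms by (intro sum.neutral) auto
  finally show ?thesis by simp
qed

definition ut :: "nat \<Rightarrow> 'a::field mat \<Rightarrow> bool" where
  "ut n M \<longleftrightarrow> M \<in> carrier_mat n n \<and> (\<forall>i<n. \<forall>j<n. j < i \<longrightarrow> M$$(i,j) = 0)"
definition su :: "nat \<Rightarrow> 'a::field mat \<Rightarrow> bool" where
  "su n M \<longleftrightarrow> M \<in> carrier_mat n n \<and> (\<forall>i<n. \<forall>j<n. j \<le> i \<longrightarrow> M$$(i,j) = 0)"

lemma borel_ut: "g \<in> borel n \<Longrightarrow> ut n g"
  by (auto simp: borel_def ut_def)

lemma borel_carrier: "g \<in> borel n \<Longrightarrow> g \<in> carrier_mat n n"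
  by (auto simp: borel_def)

lemma ut_mult:
  assumes "ut n A" "ut n B"
  shows "ut n (A*B)" "\<And>i. i < n \<Longrightarrow> (A*B)$$(i,i) = A$$(i,i) * B$$(i,i)"
proof -
  have c: "A \<in> carrier_mat n n" "B \<in> carrier_mat n n" using assms by (auto simp: ut_def)
  show "ut n (A*B)" unfolding ut_def
  proof (intro conjI allI impI)
    show "A * B \<in> carrier_mat n n" using c by auto
    fix i j assume ij: "i < n" "j < n" "j < i"
    show "(A*B)$$(i,j) = 0" unfolding mult_ent[OF c ij(1,2)]
    proof (rule sum.neutral, intro ballI)
      fix l assume "l \<in> {..<n}"
      then show "A$$(i,l) * B$$(l,j) = 0" using assms ij unfolding ut_def
        by (cases "l < i") auto
    qed
  qed
  fix i assume i: "i < n"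
  show "(A*B)$$(i,i) = A$$(i,i) * B$$(i,i)" unfolding mult_ent[OF c i i]
  proof (rule sum_single)
    fix l assume "l \<in> {..<n}" "l \<noteq> i"
    then show "A$$(i,l) * B$$(l,i) = 0" using assms i unfolding ut_def
      by (cases "l < i") auto
  qed (use i in auto)
qed

lemma borel_mult: assumes "g \<in> borel n" "h \<in> borel n" shows "g * h \<in> borel n"
proof -
  have u: "ut n g" "ut n h" using assms by (auto intro: borel_ut)
  show ?thesis using ut_mult[OF u] assms unfolding borel_def ut_def by auto
qed

lemma inv_borel:
  assumes g: "g \<in> borel n" and gi: "gi \<in> carrier_mat n n" and inv: "gi * g = 1\<^sub>m n"
  shows "gi \<in> borel n"
proof -
  have gc: "g \<in> carrier_mat n n" using g by (auto simp: borel_def)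
  have low: "\<forall>i<n. j < i \<longrightarrow> gi$$(i,j) = 0" for j
  proof (induction j rule: less_induct)
    case (less j)
    show ?case
    proof (intro allI impI)
      fix i assume i: "i < n" "j < i"
      have jn: "j < n" using i by auto
      have "0 = (gi*g)$$(i,j)" using inv i jn by simp
      also have "\<dots> = (\<Sum>l<n. gi$$(i,l) * g$$(l,j))" by (rule mult_ent[OF gi gc i(1) jn])
      also have "\<dots> = gi$$(i,j) * g$$(j,j)"
      proof (rule sum_single)
        fix l assume "l \<in> {..<n}" "l \<noteq> j"
        then show "gi$$(i,l) * g$$(l,j) = 0" using less i g unfolding borel_def
          by (cases "l < j") auto
      qed (use jn in auto)
      finally show "gi$$(i,j) = 0" using g jn unfolding borel_def by auto
    qed
  qed
  have diag: "gi$$(i,i) \<noteq> 0" if i: "i < n" for i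
  proof -
    have "1 = (gi*g)$$(i,i)" using inv i by simp
    also have "\<dots> = (\<Sum>l<n. gi$$(i,l) * g$$(l,i))" by (rule mult_ent[OF gi gc i i])
    also have "\<dots> = gi$$(i,i) * g$$(i,i)"
    proof (rule sum_single)
      fix l assume "l \<in> {..<n}" "l \<noteq> i"
      then show "gi$$(i,l) * g$$(l,i) = 0" using low i g unfolding borel_def
        by (cases "l < i") auto
    qed (use i in auto)
    finally show ?thesis by auto
  qed
  show ?thesis using gi low diag unfolding borel_def by auto
qed

lemma inv_unique:
  fixes g gi gi' :: "'a::field mat"
  assumes "g \<in> carrier_mat n n" "gi \<in> carrier_mat n n" "gi' \<in> carrier_mat n n"
    "g * gi = 1\<^sub>m n" "gi' * g = 1\<^sub>m n"
  shows "gi' = gi"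
proof -
  have "gi' = gi' * (g * gi)" using assms(4) right_mult_one_mat[OF assms(3)] by simp
  also have "\<dots> = (gi' * g) * gi" using assms(1-3) assoc_mult_mat by metis
  also have "\<dots> = gi" using assms(5) left_mult_one_mat[OF assms(2)] by simp
  finally show ?thesis .
qed

lemma ut_su_mult: assumes "ut n g" "su n X" shows "su n (g*X)"
proof -
  have c: "g \<in> carrier_mat n n" "X \<in> carrier_mat n n" using assms by (auto simp: ut_def su_def)
  show ?thesis unfolding su_def
  proof (intro conjI allI impI)
    show "g * X \<in> carrier_mat n n" using c by auto
    fix i j assume ij: "i < n" "j < n" "j \<le> i"
    show "(g*X)$$(i,j) = 0" unfolding mult_ent[OF c ij(1,2)]
    proof (rule sum.neutral, intro ballI)
      fix l assume "l \<in> {..<n}"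
      then show "g$$(i,l) * X$$(l,j) = 0" using assms ij unfolding ut_def su_def
        by (cases "l < i") auto
    qed
  qed
qed

lemma su_ut_mult: assumes "su n X" "ut n g" shows "su n (X*g)"
proof -
  have c: "X \<in> carrier_mat n n" "g \<in> carrier_mat n n" using assms by (auto simp: ut_def su_def)
  show ?thesis unfolding su_def
  proof (intro conjI allI impI)
    show "X * g \<in> carrier_mat n n" using c by auto
    fix i j assume ij: "i < n" "j < n" "j \<le> i"
    show "(X*g)$$(i,j) = 0" unfolding mult_ent[OF c ij(1,2)]
    proof (rule sum.neutral, intro ballI)
      fix l assume "l \<in> {..<n}"
      then show "X$$(i,l) * g$$(l,j) = 0" using assms ij unfolding ut_def su_def
        by (cases "l \<le> i") auto
    qed
  qed
qed

lemma su_conj: "ut n g \<Longrightarrow> ut n gi \<Longrightarrow> su n X \<Longrightarrow> su n (g*X*gi)"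
  using ut_su_mult su_ut_mult by blast

lemma L1:
  assumes g: "ut n g" and gi: "ut n gi" and X: "su n X" and X': "su n X'"
    and agr: "\<And>l m. l < m \<Longrightarrow> m < n \<Longrightarrow> (l > p \<or> (l = p \<and> m < q)) \<Longrightarrow> X$$(l,m) = X'$$(l,m)"
    and ij: "i < n" "j < n" "i > p \<or> (i = p \<and> j < q)"
  shows "(g*X*gi)$$(i,j) = (g*X'*gi)$$(i,j)"
proof -
  have c: "g \<in> carrier_mat n n" "gi \<in> carrier_mat n n" "X \<in> carrier_mat n n" "X' \<in> carrier_mat n n"
    using assms by (auto simp: ut_def su_def)
  have "(g*X*gi)$$(i,j) = (\<Sum>m<n. (g*X)$$(i,m) * gi$$(m,j))"
    using c ij by (intro mult_ent) auto
  also have "\<dots> = (\<Sum>m<n. (g*X')$$(i,m) * gi$$(m,j))"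
  proof (rule sum.cong[OF refl])
    fix m assume m: "m \<in> {..<n}"
    show "(g*X)$$(i,m) * gi$$(m,j) = (g*X')$$(i,m) * gi$$(m,j)"
    proof (cases "m \<le> j")
      case False then show ?thesis using gi m ij unfolding ut_def by auto
    next
      case True
      have "(g*X)$$(i,m) = (\<Sum>l<n. g$$(i,l) * X$$(l,m))" using c ij m by (intro mult_ent) auto
      also have "\<dots> = (\<Sum>l<n. g$$(i,l) * X'$$(l,m))"
      proof (rule sum.cong[OF refl])
        fix l assume l: "l \<in> {..<n}"
        show "g$$(i,l) * X$$(l,m) = g$$(i,l) * X'$$(l,m)"
        proof (cases "l < i")
          case True then show ?thesis using g l ij unfolding ut_def by auto
        next
          case False
          show ?thesis
          proof (cases "m \<le> l")
            case True then show ?thesis using X X' l m unfolding su_def by auto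
          next
            case False
            have "l > p \<or> (l = p \<and> m < q)" using \<open>\<not> l < i\<close> \<open>m \<le> j\<close> ij(3) False by auto
            then show ?thesis using agr[of l m] False m by auto
          qed
        qed
      qed
      also have "\<dots> = (g*X')$$(i,m)" using c ij m by (intro mult_ent[symmetric]) auto
      finally show ?thesis by simp
    qed
  qed
  also have "\<dots> = (g*X'*gi)$$(i,j)"
    using c ij by (intro mult_ent[symmetric]) auto
  finally show ?thesis .
qed

definition diagm :: "nat \<Rightarrow> (nat \<Rightarrow> 'a::field) \<Rightarrow> 'a mat" where
  "diagm n d = mat n n (\<lambda>(i,j). if i = j then d i else 0)"

lemma diagm_carrier[simp]: "diagm n d \<in> carrier_mat n n" by (simp add: diagm_def)

lemma diagm_left:
  assumes "M \<in> carrier_mat n n" "i < n" "j < n"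
  shows "(diagm n d * M)$$(i,j) = d i * M$$(i,j)"
proof -
  have "(diagm n d * M)$$(i,j) = (\<Sum>l<n. diagm n d $$(i,l) * M$$(l,j))"
    using assms by (intro mult_ent) auto
  also have "\<dots> = diagm n d $$(i,i) * M$$(i,j)"
    by (rule sum_single) (use assms in \<open>auto simp: diagm_def\<close>)
  finally show ?thesis by (simp add: diagm_def assms)
qed

lemma diagm_right:
  assumes "M \<in> carrier_mat n n" "i < n" "j < n"
  shows "(M * diagm n d)$$(i,j) = M$$(i,j) * d j"
proof -
  have "(M * diagm n d)$$(i,j) = (\<Sum>l<n. M$$(i,l) * diagm n d $$(l,j))"
    using assms by (intro mult_ent) auto
  also have "\<dots> = M$$(i,j) * diagm n d $$(j,j)"
    by (rule sum_single) (use assms in \<open>auto simp: diagm_def\<close>)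
  finally show ?thesis by (simp add: diagm_def assms)
qed

definition rowrep :: "nat \<Rightarrow> nat \<Rightarrow> (nat \<Rightarrow> 'a::field) \<Rightarrow> 'a mat" where
  "rowrep n p b = mat n n (\<lambda>(i,j). if i = p then b j else if i = j then 1 else 0)"

lemma rowrep_carrier[simp]: "rowrep n p b \<in> carrier_mat n n" by (simp add: rowrep_def)

lemma rowrep_left:
  assumes "M \<in> carrier_mat n n" "i < n" "j < n"
  shows "(rowrep n p b * M)$$(i,j) = (if i = p then (\<Sum>l<n. b l * M$$(l,j)) else M$$(i,j))"
proof -
  have "(rowrep n p b * M)$$(i,j) = (\<Sum>l<n. rowrep n p b $$(i,l) * M$$(l,j))"
    using assms by (intro mult_ent) auto
  also have "\<dots> = (if i = p then (\<Sum>l<n. b l * M$$(l,j)) else M$$(i,j))"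
  proof (cases "i = p")
    case True then show ?thesis using assms by (auto simp: rowrep_def intro!: sum.cong)
  next
    case False
    have "(\<Sum>l<n. rowrep n p b $$(i,l) * M$$(l,j)) = rowrep n p b $$(i,i) * M$$(i,j)"
      by (rule sum_single) (use assms False in \<open>auto simp: rowrep_def\<close>)
    then show ?thesis using False assms by (simp add: rowrep_def)
  qed
  finally show ?thesis .
qed

lemma rowrep_right:
  assumes "M \<in> carrier_mat n n" "i < n" "j < n" "p < n"
  shows "(M * rowrep n p b)$$(i,j) = M$$(i,p) * b j + (if j = p then 0 else M$$(i,j))"
proof -
  have "(M * rowrep n p b)$$(i,j) = (\<Sum>l<n. M$$(i,l) * rowrep n p b $$(l,j))"
    using assms by (intro mult_ent) auto
  also have "\<dots> = M$$(i,p) * rowrep n p b $$(p,j) + (\<Sum>l\<in>{..<n}-{p}. M$$(i,l) * rowrep n p b $$(l,j))"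
    using assms by (simp add: sum.remove[of "{..<n}" p])
  also have "(\<Sum>l\<in>{..<n}-{p}. M$$(i,l) * rowrep n p b $$(l,j)) = (if j = p then 0 else M$$(i,j))"
  proof (cases "j = p")
    case True then show ?thesis using assms by (auto simp: rowrep_def intro!: sum.neutral)
  next
    case False
    have "(\<Sum>l\<in>{..<n}-{p}. M$$(i,l) * rowrep n p b $$(l,j)) = M$$(i,j) * rowrep n p b $$(j,j)"
      by (rule sum_single) (use assms False in \<open>auto simp: rowrep_def\<close>)
    then show ?thesis using False assms by (simp add: rowrep_def)
  qed
  finally show ?thesis using assms by (simp add: rowrep_def)
qed



locale qs =
  fixes n :: nat and Q :: "'a::field mat"
  assumes Qsu: "Q \<in> strict_upper n" and Qsp: "subpermutation n Q"
begin

definition inR :: "nat \<Rightarrow> bool" where "inR i \<longleftrightarrow> (\<exists>s<n. Q$$(i,s) \<noteq> 0)"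
definition sg :: "nat \<Rightarrow> nat" where "sg i = (THE s. s < n \<and> Q$$(i,s) \<noteq> 0)"

lemma Q_row_uniq: "i < n \<Longrightarrow> s < n \<Longrightarrow> s' < n \<Longrightarrow> Q$$(i,s) \<noteq> 0 \<Longrightarrow> Q$$(i,s') \<noteq> 0 \<Longrightarrow> s = s'"
  using Qsp unfolding subpermutation_def by blast

lemma Q_col_uniq: "i < n \<Longrightarrow> i' < n \<Longrightarrow> s < n \<Longrightarrow> Q$$(i,s) \<noteq> 0 \<Longrightarrow> Q$$(i',s) \<noteq> 0 \<Longrightarrow> i = i'"
  using Qsp unfolding subpermutation_def by blast

lemma sg_eq: "i < n \<Longrightarrow> s < n \<Longrightarrow> Q$$(i,s) \<noteq> 0 \<Longrightarrow> sg i = s"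
  unfolding sg_def by (rule the_equality) (auto dest: Q_row_uniq)

lemma sg_props: assumes "i < n" "inR i"
  shows "sg i < n" "Q$$(i, sg i) \<noteq> 0" "Q$$(i, sg i) = 1" "i < sg i"
proof -
  obtain s where s: "s < n" "Q$$(i,s) \<noteq> 0" using assms unfolding inR_def by auto
  have e: "sg i = s" using sg_eq[OF assms(1) s] .
  show "sg i < n" "Q$$(i, sg i) \<noteq> 0" using e s by auto
  show "Q$$(i, sg i) = 1" using e s Qsp assms(1) unfolding subpermutation_def by blast
  show "i < sg i"
  proof (rule ccontr)
    assume "\<not> i < sg i"
    then have "Q$$(i, s) = 0" using Qsu e s assms(1) unfolding strict_upper_def by auto
    then show False using s by auto
  qed
qed

lemma Q_zero: "i < n \<Longrightarrow> s < n \<Longrightarrow> \<not> (inR i \<and> s = sg i) \<Longrightarrow> Q$$(i,s) = 0"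
  using sg_eq unfolding inR_def by blast

lemma sg_inj: "i < n \<Longrightarrow> i' < n \<Longrightarrow> inR i \<Longrightarrow> inR i' \<Longrightarrow> sg i = sg i' \<Longrightarrow> i = i'"
  using sg_props Q_col_uniq by metis

definition patok :: "'a mat \<Rightarrow> nat \<times> nat \<Rightarrow> bool" where
  "patok X x \<longleftrightarrow> (inR (fst x) \<longrightarrow> (snd x < sg (fst x) \<longrightarrow> X$$x = 0) \<and> (snd x = sg (fst x) \<longrightarrow> X$$x = 1))
                  \<and> (\<not> inR (fst x) \<longrightarrow> X$$x = 0)"

definition shp :: "'a mat \<Rightarrow> bool" where
  "shp X \<longleftrightarrow> X \<in> carrier_mat n n \<and> (\<forall>i<n. \<forall>j<n. patok X (i,j))"

lemma shpD:
  assumes "shp X" "i < n" "j < n"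
  shows "inR i \<Longrightarrow> j < sg i \<Longrightarrow> X$$(i,j) = 0" "inR i \<Longrightarrow> X$$(i,sg i) = 1"
    "\<not> inR i \<Longrightarrow> X$$(i,j) = 0"
  using assms sg_props[of i] unfolding shp_def patok_def by auto

lemma shp_carrier: "shp X \<Longrightarrow> X \<in> carrier_mat n n" by (simp add: shp_def)

lemma shp_su: assumes "shp X" shows "su n X"
  unfolding su_def
proof (intro conjI allI impI)
  show "X \<in> carrier_mat n n" using assms by (simp add: shp_def)
  fix i j assume ij: "i < n" "j < n" "j \<le> i"
  show "X$$(i,j) = 0"
  proof (cases "inR i")
    case True then show ?thesis using shpD(1)[OF assms ij(1,2)] sg_props(4)[OF ij(1)] ij by auto
  next
    case False then show ?thesis using shpD(3)[OF assms ij(1,2)] by auto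
  qed
qed

lemma shp_nz: assumes "shp X" "i < n" "j < n" "X$$(i,j) \<noteq> 0" shows "inR i" "sg i \<le> j"
  using shpD[OF assms(1-3)] assms(4) by (auto simp: not_less[symmetric])

lemma su_patok_shp: assumes "su n X" "\<And>i j. i < j \<Longrightarrow> j < n \<Longrightarrow> patok X (i,j)" shows "shp X"
  unfolding shp_def
proof (intro conjI allI impI)
  show "X \<in> carrier_mat n n" using assms by (simp add: su_def)
  fix i j assume ij: "i < n" "j < n"
  show "patok X (i,j)"
  proof (cases "i < j")
    case True then show ?thesis using assms ij by auto
  next
    case False
    then have "X$$(i,j) = 0" using assms(1) ij unfolding su_def by auto
    then show ?thesis using False ij sg_props[of i] unfolding patok_def by auto
  qed
qed

lemma QU_shp: assumes "X \<in> QU n Q" shows "shp X"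
proof -
  obtain U where U: "U \<in> unitri n" "X = Q * U" using assms unfolding QU_def by auto
  have Qc: "Q \<in> carrier_mat n n" using Qsu unfolding strict_upper_def by auto
  have Uc: "U \<in> carrier_mat n n" using U unfolding unitri_def by auto
  have ent: "X$$(i,j) = (if inR i then U$$(sg i, j) else 0)" if ij: "i < n" "j < n" for i j
  proof -
    have "X$$(i,j) = (\<Sum>l<n. Q$$(i,l) * U$$(l,j))" unfolding U(2) by (rule mult_ent[OF Qc Uc ij])
    also have "\<dots> = (if inR i then U$$(sg i, j) else 0)"
    proof (cases "inR i")
      case True
      have "(\<Sum>l<n. Q$$(i,l) * U$$(l,j)) = Q$$(i,sg i) * U$$(sg i,j)"
        by (rule sum_single) (use True ij sg_props Q_zero in auto)
      then show ?thesis using True sg_props[OF ij(1) True] by simp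
    next
      case False
      then show ?thesis using Q_zero ij by (auto intro!: sum.neutral)
    qed
    finally show ?thesis .
  qed
  show ?thesis unfolding shp_def patok_def
    using U(1) ent Qc Uc sg_props unfolding unitri_def U(2) by auto
qed

definition pre :: "nat \<Rightarrow> nat" where "pre c = (THE i. i < n \<and> inR i \<and> sg i = c)"

lemma pre_eq: "i < n \<Longrightarrow> inR i \<Longrightarrow> pre (sg i) = i"
  unfolding pre_def by (rule the_equality) (auto dest: sg_inj)

lemma shp_QU: assumes X: "shp X" shows "X \<in> QU n Q"
proof -
  define U where "U = mat n n (\<lambda>(c,j). if (\<exists>i<n. inR i \<and> sg i = c) then X$$(pre c, j) else (if c = j then 1 else 0))"
  have Qc: "Q \<in> carrier_mat n n" using Qsu unfolding strict_upper_def by auto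
  have Uc: "U \<in> carrier_mat n n" by (simp add: U_def)
  have Uu: "U \<in> unitri n" unfolding unitri_def
  proof (intro conjI allI impI CollectI)
    show "U \<in> carrier_mat n n" by (rule Uc)
    fix c j assume cj: "c < n" "j < n" "j < c"
    show "U$$(c,j) = 0"
    proof (cases "\<exists>i<n. inR i \<and> sg i = c")
      case True
      then obtain i where i: "i < n" "inR i" "sg i = c" by auto
      then show ?thesis using cj shpD(1)[OF X i(1) cj(2)] pre_eq[OF i(1,2)] by (auto simp: U_def)
    qed (use cj in \<open>auto simp: U_def\<close>)
  next
    fix c assume c: "c < n"
    show "U$$(c,c) = 1"
    proof (cases "\<exists>i<n. inR i \<and> sg i = c")
      case True
      then obtain i where i: "i < n" "inR i" "sg i = c" by auto
      then show ?thesis using c shpD(2)[OF X i(1) c] pre_eq[OF i(1,2)] by (auto simp: U_def)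
    qed (use c in \<open>auto simp: U_def\<close>)
  qed
  have "X = Q * U"
  proof (rule eq_matI)
    fix i j assume "i < dim_row (Q*U)" "j < dim_col (Q*U)"
    then have ij: "i < n" "j < n" using Qc Uc by auto
    have "(Q*U)$$(i,j) = (\<Sum>l<n. Q$$(i,l) * U$$(l,j))" by (rule mult_ent[OF Qc Uc ij])
    also have "\<dots> = X$$(i,j)"
    proof (cases "inR i")
      case True
      have "(\<Sum>l<n. Q$$(i,l) * U$$(l,j)) = Q$$(i,sg i) * U$$(sg i,j)"
        by (rule sum_single) (use True ij sg_props Q_zero in auto)
      then show ?thesis using True sg_props[OF ij(1) True] pre_eq[OF ij(1) True] ij by (auto simp: U_def)
    next
      case False
      then show ?thesis using Q_zero ij shpD(3)[OF X ij] by (auto intro!: sum.neutral)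
    qed
    finally show "X$$(i,j) = (Q*U)$$(i,j)" by simp
  qed (use X Qc Uc in \<open>auto simp: shp_def\<close>)
  then show ?thesis using Uu unfolding QU_def by auto
qed

lemma QU_iff: "X \<in> QU n Q \<longleftrightarrow> shp X" using QU_shp shp_QU by blast

lemma LEAD:
  assumes A: "shp A" and z: "\<And>j. j < t \<Longrightarrow> j < n \<Longrightarrow> (\<Sum>l<n. c l * A$$(l,j)) = 0"
    and l: "l < n" "inR l" "sg l < t"
  shows "c l = 0"
proof -
  have "\<forall>l<n. inR l \<longrightarrow> sg l = s \<longrightarrow> s < t \<longrightarrow> c l = 0" for s
  proof (induction s rule: less_induct)
    case (less s)
    show ?case
    proof (intro allI impI)
      fix l assume l: "l < n" "inR l" "sg l = s" "s < t"
      have sn: "s < n" using sg_props[OF l(1,2)] l by auto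
      have "0 = (\<Sum>l'<n. c l' * A$$(l',s))" using z[OF l(4) sn] by simp
      also have "\<dots> = c l * A$$(l,s)"
      proof (rule sum_single)
        fix l' assume l': "l' \<in> {..<n}" "l' \<noteq> l"
        show "c l' * A$$(l',s) = 0"
        proof (cases "A$$(l',s) = 0")
          case False
          then have r: "inR l'" "sg l' \<le> s" using shp_nz[OF A _ sn] l' by auto
          have "sg l' \<noteq> s" using sg_inj[of l' l] l l' r by auto
          then have "sg l' < s" using r by auto
          then have "c l' = 0" using less[of "sg l'"] l' r l by auto
          then show ?thesis by simp
        qed simp
      qed (use l in auto)
      also have "A$$(l,s) = 1" using shpD(2)[OF A l(1) sn] l by auto
      finally show "c l = 0" by simp
    qed
  qed
  then show ?thesis using l by auto
qed

definition Tok :: "nat \<Rightarrow> nat \<Rightarrow> bool" where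
  "Tok p q \<longleftrightarrow> \<not> inR q \<or> (inR p \<and> inR q \<and> sg p < sg q)"

end



lemma sum_delta2:
  fixes p q n :: nat
  assumes "p < n" "q < n" "p \<noteq> q"
  shows "(\<Sum>l<n. ((if l = p then 1 else 0) + (if l = q then c else 0)) * (f l :: 'a::field)) = f p + c * f q"
proof -
  have "(\<Sum>l<n. ((if l = p then 1 else 0) + (if l = q then c else 0)) * f l)
     = (\<Sum>l<n. (if l = p then f l else 0) + (if l = q then c * f l else 0))"
    using assms by (intro sum.cong) auto
  also have "\<dots> = f p + c * f q" using assms by (simp add: sum.distrib sum.delta)
  finally show ?thesis .
qed

lemma E_rowrep1:
  assumes "p < q" "q < n"
  shows "1\<^sub>m n + c \<cdot>\<^sub>m unit_mat_pq n p q = rowrep n p (\<lambda>j. (if j = p then 1 else 0) + (if j = q then c else 0))"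
  using assms by (intro eq_matI) (auto simp: rowrep_def unit_mat_pq_def)

lemma E_rowrep2:
  assumes "p < q" "q < n"
  shows "1\<^sub>m n - c \<cdot>\<^sub>m unit_mat_pq n p q = rowrep n p (\<lambda>j. (if j = p then 1 else 0) + (if j = q then -c else 0))"
  using assms by (intro eq_matI) (auto simp: rowrep_def unit_mat_pq_def)

lemma rowrep_pq_left:
  assumes "p < q" "q < n" "M \<in> carrier_mat n n" "i < n" "j < n"
  shows "(rowrep n p (\<lambda>j. (if j = p then 1 else 0) + (if j = q then c else 0)) * M)$$(i,j)
     = M$$(i,j) + (if i = p then c * M$$(q,j) else 0)"
  using assms by (simp add: rowrep_left sum_delta2)

lemma rowrep_pq_right:
  assumes "p < q" "q < n" "M \<in> carrier_mat n n" "i < n" "j < n"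
  shows "(M * rowrep n p (\<lambda>j. (if j = p then 1 else 0) + (if j = q then c else 0)))$$(i,j)
     = M$$(i,j) + (if j = q then c * M$$(i,p) else 0)"
  using assms by (auto simp: rowrep_right)

lemma elem_op_eq:
  assumes "p < q" "q < n"
  shows "elem_op n p q c X = rowrep n p (\<lambda>j. (if j = p then 1 else 0) + (if j = q then c else 0)) * X *
       rowrep n p (\<lambda>j. (if j = p then 1 else 0) + (if j = q then -c else 0))"
  unfolding elem_op_def E_rowrep1[OF assms] E_rowrep2[OF assms] ..

lemma elem_op_ent:
  assumes "su n X" "p < q" "q < n" "i < n" "j < n"
  shows "elem_op n p q c X $$ (i,j) = X$$(i,j) + (if i = p then c * X$$(q,j) else 0) - (if j = q then c * X$$(i,p) else 0)"
proof -
  let ?R1 = "rowrep n p (\<lambda>j. (if j = p then 1 else 0) + (if j = q then c else 0))"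
  let ?R2 = "rowrep n p (\<lambda>j. (if j = p then 1 else 0) + (if j = q then -c else 0))"
  have X: "X \<in> carrier_mat n n" using assms by (simp add: su_def)
  have qp: "X$$(q,p) = 0" using assms unfolding su_def by auto
  have c1: "?R1 * X \<in> carrier_mat n n" by (rule mult_carrier_mat[OF rowrep_carrier X])
  have "elem_op n p q c X $$ (i,j) = (?R1 * X * ?R2) $$ (i,j)" unfolding elem_op_eq[OF assms(2,3)] ..
  also have "\<dots> = (?R1 * X)$$(i,j) + (if j = q then -c * (?R1 * X)$$(i,p) else 0)"
    by (rule rowrep_pq_right[OF assms(2,3) c1 assms(4,5)])
  also have "\<dots> = X$$(i,j) + (if i = p then c * X$$(q,j) else 0) - (if j = q then c * X$$(i,p) else 0)"
    using assms X qp by (simp add: rowrep_pq_left)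
  finally show ?thesis .
qed

lemma elem_op_carrier: assumes "X \<in> carrier_mat n n" shows "elem_op n p q c X \<in> carrier_mat n n"
proof -
  have E: "unit_mat_pq n p q \<in> carrier_mat n n" by (simp add: unit_mat_pq_def)
  have a: "1\<^sub>m n + c \<cdot>\<^sub>m unit_mat_pq n p q \<in> carrier_mat n n" by (rule add_carrier_mat, rule smult_carrier_mat, rule E)
  have b: "1\<^sub>m n - c \<cdot>\<^sub>m unit_mat_pq n p q \<in> carrier_mat n n" by (rule minus_carrier_mat, rule smult_carrier_mat, rule E)
  show ?thesis unfolding elem_op_def using a b assms by (metis mult_carrier_mat)
qed

context qs begin

lemma elem_op_shp:
  assumes X: "shp X" and pq: "p < q" "q < n" and T: "Tok p q"
  shows "shp (elem_op n p q c X)"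
proof -
  have suX: "su n X" by (rule shp_su[OF X])
  have Xc: "X \<in> carrier_mat n n" using X by (simp add: shp_def)
  show ?thesis unfolding shp_def
  proof (intro conjI allI impI)
    show "elem_op n p q c X \<in> carrier_mat n n" using elem_op_carrier[OF Xc] .
    fix i j assume ij: "i < n" "j < n"
    have e: "elem_op n p q c X $$ (i,j) = X$$(i,j) + (if i = p then c * X$$(q,j) else 0) - (if j = q then c * X$$(i,p) else 0)"
      by (rule elem_op_ent[OF suX pq ij])
    have pn: "p < n" using pq by auto
    have A1: "X$$(i,p) = 0" if "\<not> (inR i \<and> sg i \<le> p)"
      using shp_nz[OF X ij(1) pn] that by blast
    have A2: "X$$(q,j) = 0" if "\<not> (inR q \<and> sg q \<le> j)"
      using shp_nz[OF X pq(2) ij(2)] that by blast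
    show "patok (elem_op n p q c X) (i,j)"
      unfolding patok_def fst_conv snd_conv e
    proof (intro conjI impI)
      assume R: "inR i" and js: "j < sg i"
      have "X$$(i,j) = 0" using shpD(1)[OF X ij R js] .
      moreover have "i = p \<Longrightarrow> X$$(q,j) = 0" using A2 T js unfolding Tok_def by auto
      moreover have "j = q \<Longrightarrow> X$$(i,p) = 0" using A1 js pq by auto
      ultimately show "X$$(i,j) + (if i = p then c * X$$(q,j) else 0) - (if j = q then c * X$$(i,p) else 0) = 0"
        by auto
    next
      assume R: "inR i" and js: "j = sg i"
      have "X$$(i,j) = 1" using shpD(2)[OF X ij(1) _ R] js sg_props[OF ij(1) R] by auto
      moreover have "i = p \<Longrightarrow> X$$(q,j) = 0" using A2 T js unfolding Tok_def by auto
      moreover have "j = q \<Longrightarrow> X$$(i,p) = 0" using A1 js pq by auto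
      ultimately show "X$$(i,j) + (if i = p then c * X$$(q,j) else 0) - (if j = q then c * X$$(i,p) else 0) = 1"
        by auto
    next
      assume R: "\<not> inR i"
      have "X$$(i,j) = 0" using shpD(3)[OF X ij R] .
      moreover have "i = p \<Longrightarrow> X$$(q,j) = 0" using A2 T R unfolding Tok_def by auto
      moreover have "X$$(i,p) = 0" using A1 R by auto
      ultimately show "X$$(i,j) + (if i = p then c * X$$(q,j) else 0) - (if j = q then c * X$$(i,p) else 0) = 0"
        by auto
    qed
  qed
qed

end



context qs begin

definition Fset :: "'a mat \<Rightarrow> (nat \<times> nat) set" where
  "Fset u = {(i,j). i < j \<and> j < n \<and> u$$(i,j) \<noteq> 0}"

lemma Fset_finite: "finite (Fset u)"
proof -
  have "Fset u \<subseteq> {..<n} \<times> {..<n}" unfolding Fset_def by auto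
  then show ?thesis by (rule finite_subset) auto
qed

definition opsok :: "(nat \<times> nat \<times> 'a) list \<Rightarrow> (nat \<Rightarrow> 'a mat) \<Rightarrow> bool" where
  "opsok ops As \<longleftrightarrow> (\<forall>k < length ops. let (p,q,c) = ops ! k in p < q \<and> q < n \<and> As (Suc k) = elem_op n p q c (As k))"

lemma PL:
  assumes "u \<in> unitri n" "\<And>p q. p < q \<Longrightarrow> q < n \<Longrightarrow> u$$(p,q) \<noteq> 0 \<Longrightarrow> Tok p q" "shp X"
  shows "\<exists>ops As. opsok ops As \<and> As 0 = X \<and> (\<forall>k \<le> length ops. shp (As k)) \<and> As (length ops) * u = u * X"
  using assms
proof (induction "card (Fset u)" arbitrary: u rule: less_induct)
  case less
  have uc: "u \<in> carrier_mat n n" using less.prems(1) by (simp add: unitri_def)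
  have Xc: "X \<in> carrier_mat n n" using less.prems(3) by (simp add: shp_def)
  show ?case
  proof (cases "Fset u = {}")
    case True
    have u1: "u = 1\<^sub>m n"
    proof (rule eq_matI)
      fix i j assume "i < dim_row (1\<^sub>m n :: 'a mat)" "j < dim_col (1\<^sub>m n :: 'a mat)"
      then have ij: "i < n" "j < n" by auto
      show "u$$(i,j) = 1\<^sub>m n $$ (i,j)"
      proof (cases "i < j")
        case True
        then have "u$$(i,j) = 0" using \<open>Fset u = {}\<close> ij unfolding Fset_def by auto
        then show ?thesis using True ij by auto
      next
        case False
        then show ?thesis using less.prems(1) ij unfolding unitri_def
          by (cases "i = j") auto
      qed
    qed (use uc in auto)
    show ?thesis
      by (rule exI[of _ "[]"], rule exI[of _ "\<lambda>_. X"]) (use less.prems u1 Xc in \<open>auto simp: opsok_def\<close>)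
  next
    case False
    define p where "p = Max (fst ` Fset u)"
    have fin: "finite (Fset u)" by (rule Fset_finite)
    have "p \<in> fst ` Fset u" unfolding p_def using fin False by (intro Max_in) auto
    then obtain q where pq: "(p,q) \<in> Fset u" by auto
    have pmax: "i \<le> p" if "(i,j) \<in> Fset u" for i j
      unfolding p_def using fin that by (intro Max_ge) force+
    have pq': "p < q" "q < n" "u$$(p,q) \<noteq> 0" using pq unfolding Fset_def by auto
    have pn: "p < n" using pq' by auto
    define c where "c = u$$(p,q)"
    define u2 where "u2 = mat n n (\<lambda>(i,j). if i = p \<and> j = q then 0 else u$$(i,j))"
    have u2c: "u2 \<in> carrier_mat n n" by (simp add: u2_def)
    have u2u: "u2 \<in> unitri n" using less.prems(1) pq' unfolding unitri_def u2_def by auto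
    have F2: "Fset u2 = Fset u - {(p,q)}" unfolding Fset_def u2_def by (auto split: if_splits)
    have card: "card (Fset u2) < card (Fset u)" unfolding F2 using fin pq by (metis card_Diff1_less)
    have T2: "Tok p' q'" if "p' < q'" "q' < n" "u2$$(p',q') \<noteq> 0" for p' q'
      using less.prems(2)[of p' q'] that unfolding u2_def by (auto split: if_splits)
    obtain ops As where IH: "opsok ops As" "As 0 = X" "\<forall>k \<le> length ops. shp (As k)"
      "As (length ops) * u2 = u2 * X"
      using less.hyps[OF card u2u T2 less.prems(3)] by blast
    define b1 where "b1 = (\<lambda>j. (if j = p then 1 else 0) + (if j = q then c else (0::'a)))"
    define b2 where "b2 = (\<lambda>j. (if j = p then 1 else 0) + (if j = q then -c else (0::'a)))"
    have rowq: "u$$(q,j) = (if q = j then 1 else 0)" if j: "j < n" for j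
    proof -
      consider "j < q" | "j = q" | "q < j" by linarith
      then show ?thesis
      proof cases
        case 3
        show ?thesis
        proof (rule ccontr)
          assume "u$$(q,j) \<noteq> (if q = j then 1 else 0)"
          then have "(q,j) \<in> Fset u" using 3 j unfolding Fset_def by auto
          then show False using pmax pq' by fastforce
        qed
      qed (use less.prems(1) j pq' in \<open>auto simp: unitri_def\<close>)
    qed
    have R1u2: "rowrep n p b1 * u2 = u"
    proof (rule eq_matI)
      fix i j assume "i < dim_row u" "j < dim_col u"
      then have ij: "i < n" "j < n" using uc by auto
      have "(rowrep n p b1 * u2)$$(i,j) = u2$$(i,j) + (if i = p then c * u2$$(q,j) else 0)"
        unfolding b1_def by (rule rowrep_pq_left[OF pq'(1,2) u2c ij])
      also have "\<dots> = u$$(i,j)"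
        using rowq[OF ij(2)] ij pq' unfolding u2_def c_def by auto
      finally show "(rowrep n p b1 * u2)$$(i,j) = u$$(i,j)" .
    qed (use uc u2c in \<open>auto simp: rowrep_def\<close>)
    have R2R1: "rowrep n p b2 * rowrep n p b1 = 1\<^sub>m n"
    proof (rule eq_matI)
      fix i j assume "i < dim_row (1\<^sub>m n :: 'a mat)" "j < dim_col (1\<^sub>m n :: 'a mat)"
      then have ij: "i < n" "j < n" by auto
      have "(rowrep n p b2 * rowrep n p b1)$$(i,j) = rowrep n p b1 $$(i,j) + (if i = p then -c * rowrep n p b1 $$(q,j) else 0)"
        unfolding b2_def by (rule rowrep_pq_left[OF pq'(1,2) rowrep_carrier ij])
      also have "\<dots> = 1\<^sub>m n $$ (i,j)"
        using ij pq' by (auto simp: rowrep_def b1_def)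
      finally show "(rowrep n p b2 * rowrep n p b1)$$(i,j) = 1\<^sub>m n $$ (i,j)" .
    qed (auto simp: rowrep_def)
    have R2u: "rowrep n p b2 * u = u2"
    proof -
      have "rowrep n p b2 * u = rowrep n p b2 * (rowrep n p b1 * u2)" using R1u2 by simp
      also have "\<dots> = (rowrep n p b2 * rowrep n p b1) * u2"
        using u2c by (simp add: assoc_mult_mat[of _ n n _ n _ n])
      also have "\<dots> = u2" using R2R1 u2c by simp
      finally show ?thesis .
    qed
    define m where "m = length ops"
    define As' where "As' k = (if k \<le> m then As k else elem_op n p q c (As m))" for k
    have Tpq: "Tok p q" using less.prems(2)[OF pq'] .
    have Asm: "shp (As m)" using IH(3) m_def by auto
    have Amc: "As m \<in> carrier_mat n n" using Asm by (simp add: shp_def)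
    show ?thesis
    proof (intro exI[of _ "ops @ [(p,q,c)]"] exI[of _ As'] conjI)
      show "opsok (ops @ [(p,q,c)]) As'"
        unfolding opsok_def
      proof (intro allI impI)
        fix k assume k: "k < length (ops @ [(p,q,c)])"
        show "let (p', q', c') = (ops @ [(p,q,c)]) ! k in p' < q' \<and> q' < n \<and> As' (Suc k) = elem_op n p' q' c' (As' k)"
        proof (cases "k < m")
          case True
          have e: "(ops @ [(p,q,c)]) ! k = ops ! k" using True m_def by (simp add: nth_append)
          obtain p' q' c' where o: "ops ! k = (p',q',c')" by (cases "ops ! k") auto
          have "p' < q' \<and> q' < n \<and> As (Suc k) = elem_op n p' q' c' (As k)"
            using IH(1) True o unfolding opsok_def m_def by (metis (mono_tags, lifting) case_prod_conv)
          then show ?thesis using e o True unfolding As'_def by auto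
        next
          case False
          then have km: "k = m" using k m_def by auto
          then show ?thesis using pq' unfolding As'_def m_def by (simp add: nth_append)
        qed
      qed
      show "As' 0 = X" using IH(2) unfolding As'_def by simp
      show "\<forall>k \<le> length (ops @ [(p,q,c)]). shp (As' k)"
      proof (intro allI impI)
        fix k assume k: "k \<le> length (ops @ [(p,q,c)])"
        show "shp (As' k)"
        proof (cases "k \<le> m")
          case True then show ?thesis using IH(3) m_def unfolding As'_def by auto
        next
          case False
          then show ?thesis unfolding As'_def using elem_op_shp[OF Asm pq'(1,2) Tpq] by auto
        qed
      qed
      have "As' (length (ops @ [(p,q,c)])) = rowrep n p b1 * As m * rowrep n p b2"
        unfolding As'_def m_def b1_def b2_def by (simp add: elem_op_eq[OF pq'(1,2)])
      also have "\<dots> * u = rowrep n p b1 * (As m * (rowrep n p b2 * u))"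
        using Amc uc by (simp add: assoc_mult_mat[of _ n n _ n _ n])
      also have "\<dots> = rowrep n p b1 * (u2 * X)" using R2u IH(4) m_def by simp
      also have "\<dots> = (rowrep n p b1 * u2) * X" using u2c Xc by (simp add: assoc_mult_mat[of _ n n _ n _ n])
      also have "\<dots> = u * X" using R1u2 by simp
      finally show "As' (length (ops @ [(p,q,c)])) * u = u * X" .
    qed
  qed
qed

end



definition bef :: "nat \<times> nat \<Rightarrow> nat \<times> nat \<Rightarrow> bool" where
  "bef x y \<longleftrightarrow> fst x > fst y \<or> (fst x = fst y \<and> snd x < snd y)"

definition Lrows :: "nat \<Rightarrow> nat \<Rightarrow> (nat \<times> nat) list" where
  "Lrows n m = concat (map (\<lambda>i. map (\<lambda>j. (i,j)) [Suc i..<n]) (rev [0..<m]))"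

lemma Lrows_Suc: "Lrows n (Suc m) = map (\<lambda>j. (m,j)) [Suc m..<n] @ Lrows n m"
  by (simp add: Lrows_def)

lemma Lrows_set: "set (Lrows n m) = {(i,j). i < m \<and> i < j \<and> j < n}"
  by (induction m) (auto simp: Lrows_Suc, auto simp: Lrows_def)

lemma Lrows_sorted: "sorted_wrt bef (Lrows n m)"
proof (induction m)
  case 0 then show ?case by (simp add: Lrows_def)
next
  case (Suc m)
  have a: "sorted_wrt bef (map (\<lambda>j. (m,j)) [Suc m..<n])"
    by (simp add: sorted_wrt_map bef_def sorted_wrt_iff_nth_less)
  have c: "\<forall>x\<in>set (map (\<lambda>j. (m,j)) [Suc m..<n]). \<forall>y\<in>set (Lrows n m). bef x y"
    using Lrows_set[of n m] by (auto simp: bef_def)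
  show ?case unfolding Lrows_Suc sorted_wrt_append
    using a Suc.IH c by blast
qed

lemma bp_eq: "belitskii_positions n = Lrows n n"
  by (simp add: belitskii_positions_def Lrows_def)

lemma bp_set: "set (belitskii_positions n) = {(i,j). i < j \<and> j < n}"
  unfolding bp_eq Lrows_set by auto

lemma bp_sorted: "sorted_wrt bef (belitskii_positions n)"
  unfolding bp_eq by (rule Lrows_sorted)

lemma bp_before: "k < length (belitskii_positions n) \<Longrightarrow> m < k \<Longrightarrow>
   bef (belitskii_positions n ! m) (belitskii_positions n ! k)"
  using bp_sorted[of n] by (simp add: sorted_wrt_iff_nth_less)

lemma bef_irrefl: "\<not> bef x x" by (auto simp: bef_def)
lemma bef_asym: "bef x y \<Longrightarrow> \<not> bef y x" by (auto simp: bef_def)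

lemma bp_char:
  assumes k: "k < length (belitskii_positions n)"
  shows "(\<exists>m<k. x = belitskii_positions n ! m) \<longleftrightarrow>
         (x \<in> set (belitskii_positions n) \<and> bef x (belitskii_positions n ! k))"
proof
  assume "\<exists>m<k. x = belitskii_positions n ! m"
  then obtain m where m: "m < k" "x = belitskii_positions n ! m" by auto
  then show "x \<in> set (belitskii_positions n) \<and> bef x (belitskii_positions n ! k)"
    using k bp_before[OF k m(1)] by auto
next
  assume a: "x \<in> set (belitskii_positions n) \<and> bef x (belitskii_positions n ! k)"
  then obtain m where m: "m < length (belitskii_positions n)" "x = belitskii_positions n ! m"
    by (auto simp: in_set_conv_nth)
  show "\<exists>m<k. x = belitskii_positions n ! m"
  proof (cases "m < k")
    case True then show ?thesis using m by auto
  next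
    case False
    then have "m = k \<or> k < m" by auto
    then show ?thesis
    proof
      assume "m = k" then show ?thesis using a m bef_irrefl by auto
    next
      assume "k < m"
      then have "bef (belitskii_positions n ! k) x" using bp_before[OF m(1)] m by auto
      then show ?thesis using a bef_asym by blast
    qed
  qed
qed



lemma diagm_dims[simp]: "dim_row (diagm n d) = n" "dim_col (diagm n d) = n"
  by (auto simp: diagm_def)
lemma rowrep_dims[simp]: "dim_row (rowrep n p b) = n" "dim_col (rowrep n p b) = n"
  by (auto simp: rowrep_def)

lemma mcn: "A \<in> carrier_mat n n \<Longrightarrow> B \<in> carrier_mat n n \<Longrightarrow> A * B \<in> carrier_mat n n"
  by simp


locale brun = qs n Q for n :: nat and Q :: "'a::field mat" +
  fixes A :: "'a mat" and As :: "nat \<Rightarrow> 'a mat" and Gs :: "nat \<Rightarrow> 'a mat set"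
  assumes shpA: "shp A" and run: "belitskii_run n A As Gs"
begin

lemmas assocn = assoc_mult_mat[of _ n n _ n _ n]

abbreviation bp where "bp \<equiv> belitskii_positions n"

definition agreeS :: "nat \<Rightarrow> 'a mat \<Rightarrow> 'a mat \<Rightarrow> bool" where
  "agreeS k M M' \<longleftrightarrow> (\<forall>m<k. M $$ (bp!m) = M' $$ (bp!m))"

lemma run0: "As 0 = A" "Gs 0 = borel n" using run unfolding belitskii_run_def by auto

lemma agree_conv: "(\<forall>m\<le>k. case bp!m of (i,j) \<Rightarrow> M$$(i,j) = M'$$(i,j)) \<longleftrightarrow> agreeS (Suc k) M M'"
  unfolding agreeS_def less_Suc_eq_le by (simp add: case_prod_beta)

lemma run_step:
  assumes k: "k < length bp" and pq: "bp!k = (p,q)"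
  shows "(let V = {Y $$ (p,q) | Y. sim_by n (Gs k) (As k) Y} in
           if V = {0} \<or> V = UNIV then sim_by n (Gs k) (As k) (As (Suc k)) \<and> As (Suc k) $$ (p,q) = 0
           else if V = UNIV - {0} then sim_by n (Gs k) (As k) (As (Suc k)) \<and> As (Suc k) $$ (p,q) = 1
           else As (Suc k) = As k)"
    "Gs (Suc k) = {g \<in> Gs k. \<exists>gi \<in> carrier_mat n n. g*gi = 1\<^sub>m n \<and> gi*g = 1\<^sub>m n \<and>
        agreeS (Suc k) (g * As (Suc k) * gi) (As (Suc k))}"
proof -
  note r = run[unfolded belitskii_run_def, THEN conjunct2, THEN conjunct2, rule_format, OF k,
      unfolded pq Let_def prod.case]
  show "(let V = {Y $$ (p,q) | Y. sim_by n (Gs k) (As k) Y} in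
           if V = {0} \<or> V = UNIV then sim_by n (Gs k) (As k) (As (Suc k)) \<and> As (Suc k) $$ (p,q) = 0
           else if V = UNIV - {0} then sim_by n (Gs k) (As k) (As (Suc k)) \<and> As (Suc k) $$ (p,q) = 1
           else As (Suc k) = As k)" using r unfolding Let_def by blast
  show "Gs (Suc k) = {g \<in> Gs k. \<exists>gi \<in> carrier_mat n n. g*gi = 1\<^sub>m n \<and> gi*g = 1\<^sub>m n \<and>
        agreeS (Suc k) (g * As (Suc k) * gi) (As (Suc k))}"
    using r unfolding agree_conv[symmetric] by blast
qed


definition Inv :: "nat \<Rightarrow> bool" where
  "Inv k \<longleftrightarrow> (\<exists>h hi. h \<in> borel n \<and> hi \<in> borel n \<and> h*hi = 1\<^sub>m n \<and> hi*h = 1\<^sub>m n \<and> As k = h*A*hi)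
   \<and> (\<forall>g gi. g \<in> borel n \<longrightarrow> gi \<in> carrier_mat n n \<longrightarrow> g*gi = 1\<^sub>m n \<longrightarrow> gi*g = 1\<^sub>m n \<longrightarrow>
        agreeS k (g * As k * gi) (As k) \<longrightarrow> g \<in> Gs k)
   \<and> (\<forall>g\<in>Gs k. g \<in> borel n \<and> (\<forall>gi \<in> carrier_mat n n. g*gi = 1\<^sub>m n \<longrightarrow> gi*g = 1\<^sub>m n \<longrightarrow>
        agreeS k (g * As k * gi) (As k)))
   \<and> (\<forall>m<k. patok (As k) (bp!m))"

definition V :: "nat \<Rightarrow> nat \<Rightarrow> nat \<Rightarrow> 'a set" where
  "V k p q = {Y $$ (p,q) | Y. sim_by n (Gs k) (As k) Y}"

lemma pos_props:
  assumes "k < length bp" "bp!k = (p,q)"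
  shows "p < q" "q < n"
  using nth_mem[OF assms(1)] assms(2) bp_set[of n] by auto

lemma before_props:
  assumes "k < length bp" "bp!k = (p,q)" "m < k" "bp!m = (i,j)"
  shows "i < j" "j < n" "i > p \<or> (i = p \<and> j < q)"
proof -
  have "m < length bp" using assms by auto
  from nth_mem[OF this] assms(4) bp_set[of n] show "i < j" "j < n" by auto
  from bp_before[OF assms(1,3)] assms(2,4) show "i > p \<or> (i = p \<and> j < q)" by (auto simp: bef_def)
qed

lemma in_before:
  assumes "k < length bp" "bp!k = (p,q)" "i < j" "j < n" "i > p \<or> (i = p \<and> j < q)"
  shows "\<exists>m<k. bp!m = (i,j)"
proof -
  have "(i,j) \<in> set bp \<and> bef (i,j) (bp!k)" using assms bp_set[of n] by (auto simp: bef_def)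
  then show ?thesis using bp_char[OF assms(1)] by metis
qed

lemma Inv_I1: "Inv k \<Longrightarrow> \<exists>h hi. h \<in> borel n \<and> hi \<in> borel n \<and> h*hi = 1\<^sub>m n \<and> hi*h = 1\<^sub>m n \<and> As k = h*A*hi"
  unfolding Inv_def by blast
lemma Inv_I2a: "Inv k \<Longrightarrow> g \<in> borel n \<Longrightarrow> gi \<in> carrier_mat n n \<Longrightarrow> g*gi = 1\<^sub>m n \<Longrightarrow> gi*g = 1\<^sub>m n \<Longrightarrow>
        agreeS k (g * As k * gi) (As k) \<Longrightarrow> g \<in> Gs k"
  unfolding Inv_def by blast
lemma Inv_I2b: "Inv k \<Longrightarrow> g \<in> Gs k \<Longrightarrow> g \<in> borel n"
  "Inv k \<Longrightarrow> g \<in> Gs k \<Longrightarrow> gi \<in> carrier_mat n n \<Longrightarrow> g*gi = 1\<^sub>m n \<Longrightarrow> gi*g = 1\<^sub>m n \<Longrightarrow>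
     agreeS k (g * As k * gi) (As k)"
  unfolding Inv_def by blast+
lemma Inv_I3: "Inv k \<Longrightarrow> m < k \<Longrightarrow> patok (As k) (bp!m)"
  unfolding Inv_def by blast

lemma conj_su: assumes "h \<in> borel n" "hi \<in> borel n" "su n X" shows "su n (h*X*hi)"
  using su_conj[OF borel_ut[OF assms(1)] borel_ut[OF assms(2)] assms(3)] .

lemma Inv_su: assumes "Inv k" shows "su n (As k)" "As k \<in> carrier_mat n n"
proof -
  obtain h hi where "h \<in> borel n" "hi \<in> borel n" "As k = h*A*hi" using Inv_I1[OF assms] by blast
  then show "su n (As k)" using conj_su shp_su[OF shpA] by auto
  then show "As k \<in> carrier_mat n n" by (simp add: su_def)
qed

lemma one_borel: "1\<^sub>m n \<in> borel n" by (auto simp: borel_def)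

lemma one_in_G: assumes "Inv k" shows "1\<^sub>m n \<in> Gs k"
proof -
  have c: "As k \<in> carrier_mat n n" using Inv_su[OF assms] by auto
  show ?thesis by (rule Inv_I2a[OF assms one_borel, of "1\<^sub>m n"]) (use c in \<open>auto simp: agreeS_def\<close>)
qed

lemma V1: assumes "Inv k" shows "As k $$ (p,q) \<in> V k p q"
proof -
  have c: "As k \<in> carrier_mat n n" using Inv_su[OF assms] by auto
  have "sim_by n (Gs k) (As k) (As k)" unfolding sim_by_def
    by (rule bexI[OF _ one_in_G[OF assms]], rule bexI[of _ "1\<^sub>m n"]) (use c in auto)
  then show ?thesis unfolding V_def by blast
qed

lemma Inv0: "Inv 0"
proof -
  have c: "A \<in> carrier_mat n n" by (rule shp_carrier[OF shpA])
  have "\<exists>h hi. h \<in> borel n \<and> hi \<in> borel n \<and> h*hi = 1\<^sub>m n \<and> hi*h = 1\<^sub>m n \<and> A = h*A*hi"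
    by (rule exI[of _ "1\<^sub>m n"], rule exI[of _ "1\<^sub>m n"]) (use c one_borel in auto)
  then show ?thesis unfolding Inv_def run0 agreeS_def by auto
qed


lemma diagm_mult: "diagm n d * diagm n d' = diagm n (\<lambda>i. d i * d' i)"
proof (rule eq_matI)
  fix i j assume "i < dim_row (diagm n (\<lambda>i. d i * d' i))" "j < dim_col (diagm n (\<lambda>i. d i * d' i))"
  then have ij: "i < n" "j < n" by (auto simp: diagm_def)
  show "(diagm n d * diagm n d')$$(i,j) = diagm n (\<lambda>i. d i * d' i) $$ (i,j)"
    unfolding diagm_left[OF diagm_carrier ij] using ij by (simp add: diagm_def)
qed (auto simp: diagm_def)

lemma V2:
  assumes I: "Inv k" and k: "k < length bp" and pq: "bp!k = (p,q)"
    and z: "\<And>j. p < j \<Longrightarrow> j < q \<Longrightarrow> As k $$ (p,j) = 0"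
    and v: "v \<in> V k p q" and c: "c \<noteq> 0"
  shows "c * v \<in> V k p q"
proof -
  obtain Y where Y: "v = Y $$ (p,q)" "sim_by n (Gs k) (As k) Y" using v unfolding V_def by blast
  then obtain g gi where g: "g \<in> Gs k" "gi \<in> carrier_mat n n" "g*gi = 1\<^sub>m n" "gi*g = 1\<^sub>m n" "Y = g * As k * gi"
    unfolding sim_by_def by blast
  have gb: "g \<in> borel n" by (rule Inv_I2b(1)[OF I g(1)])
  have gc: "g \<in> carrier_mat n n" using gb borel_carrier by auto
  have agY: "agreeS k Y (As k)" using Inv_I2b(2)[OF I g(1-4)] g(5) by simp
  have Xc: "As k \<in> carrier_mat n n" using Inv_su[OF I] by auto
  have Yc: "Y \<in> carrier_mat n n" using g(5) gc Xc g(2) by simp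
  have pqn: "p < q" "q < n" using pos_props[OF k pq] .
  define d where "d = (\<lambda>i. if i = p then c else (1::'a))"
  define d' where "d' = (\<lambda>i. if i = p then inverse c else (1::'a))"
  let ?D = "diagm n d" let ?Di = "diagm n d'"
  have DDi: "?D * ?Di = 1\<^sub>m n" unfolding diagm_mult
    by (rule eq_matI) (auto simp: diagm_def d_def d'_def c)
  have DiD: "?Di * ?D = 1\<^sub>m n" unfolding diagm_mult
    by (rule eq_matI) (auto simp: diagm_def d_def d'_def c)
  have Db: "?D \<in> borel n" unfolding borel_def by (auto simp: diagm_def d_def c)
  define g' where "g' = ?D * g"
  define gi' where "gi' = gi * ?Di"
  have g'b: "g' \<in> borel n" unfolding g'_def by (rule borel_mult[OF Db gb])
  have gi'c: "gi' \<in> carrier_mat n n" unfolding gi'_def using g(2) by simp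
  have "g' * gi' = ?D * ((g * gi) * ?Di)" unfolding g'_def gi'_def
    using gc g(2) by (simp add: assocn mcn)
  then have inv1: "g' * gi' = 1\<^sub>m n" using g(3) DDi by simp
  have "gi' * g' = gi * ((?Di * ?D) * g)" unfolding g'_def gi'_def
    using gc g(2) by (simp add: assocn mcn)
  then have inv2: "gi' * g' = 1\<^sub>m n" using g(4) DiD gc by simp
  have conj: "g' * As k * gi' = ?D * Y * ?Di" unfolding g'_def gi'_def g(5)
    using gc g(2) Xc by (simp add: assocn mcn)
  have ent: "(g' * As k * gi')$$(i,j) = d i * Y$$(i,j) * d' j" if ij: "i < n" "j < n" for i j
  proof -
    have c1: "?D * Y \<in> carrier_mat n n" by (rule mcn[OF diagm_carrier Yc])
    show ?thesis unfolding conj diagm_right[OF c1 ij] diagm_left[OF Yc ij] ..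
  qed
  have ag: "agreeS k (g' * As k * gi') (As k)" unfolding agreeS_def
  proof (intro allI impI)
    fix m assume m: "m < k"
    obtain i j where ij: "bp!m = (i,j)" by (cases "bp!m") auto
    note b = before_props[OF k pq m ij]
    have e: "Y$$(i,j) = As k $$ (i,j)" using agY m ij unfolding agreeS_def by metis
    have "(g' * As k * gi')$$(i,j) = As k $$ (i,j)"
    proof (cases "i > p")
      case True then show ?thesis using ent[of i j] b e by (simp add: d_def d'_def)
    next
      case False
      then have "i = p" "j < q" using b by auto
      then show ?thesis using ent[of i j] b e z[of j] by (simp add: d_def d'_def)
    qed
    then show "(g' * As k * gi') $$ (bp ! m) = As k $$ (bp ! m)" using ij by simp
  qed
  have "g' \<in> Gs k" by (rule Inv_I2a[OF I g'b gi'c inv1 inv2 ag])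
  then have "sim_by n (Gs k) (As k) (g' * As k * gi')" unfolding sim_by_def using gi'c inv1 inv2 by blast
  moreover have "(g' * As k * gi')$$(p,q) = c * v" using ent[of p q] pqn Y(1) by (simp add: d_def d'_def)
  ultimately show ?thesis unfolding V_def by force
qed


lemma V3:
  assumes I: "Inv k" and k: "k < length bp" and pq: "bp!k = (p,q)"
    and tg: "\<not> inR p \<or> q < sg p"
  shows "0 \<in> V k p q"
proof -
  obtain h hi where hh: "h \<in> borel n" "hi \<in> borel n" "h*hi = 1\<^sub>m n" "hi*h = 1\<^sub>m n" "As k = h*A*hi"
    using Inv_I1[OF I] by blast
  have pqn: "p < q" "q < n" using pos_props[OF k pq] .
  have pn: "p < n" using pqn by auto
  have hc: "h \<in> carrier_mat n n" and hic: "hi \<in> carrier_mat n n" using hh borel_carrier by auto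
  have Ac: "A \<in> carrier_mat n n" by (rule shp_carrier[OF shpA])
  have Xc: "As k \<in> carrier_mat n n" and Xsu: "su n (As k)" using Inv_su[OF I] by auto
  have hpp: "hi$$(p,p) \<noteq> 0" using hh(2) pn unfolding borel_def by auto
  define b where "b = (\<lambda>j. hi$$(p,j) / hi$$(p,p))"
  define b' where "b' = (\<lambda>j. if j = p then 1 else - b j)"
  have bp1: "b p = 1" using hpp by (simp add: b_def)
  have inv1: "rowrep n p b * rowrep n p b' = 1\<^sub>m n"
  proof (rule eq_matI)
    fix i j assume "i < dim_row (1\<^sub>m n :: 'a mat)" "j < dim_col (1\<^sub>m n :: 'a mat)"
    then have ij: "i < n" "j < n" by auto
    show "(rowrep n p b * rowrep n p b')$$(i,j) = 1\<^sub>m n $$ (i,j)"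
      unfolding rowrep_right[OF rowrep_carrier ij pn] using ij pn bp1 by (auto simp: rowrep_def b'_def)
  qed auto
  have inv2: "rowrep n p b' * rowrep n p b = 1\<^sub>m n"
  proof (rule eq_matI)
    fix i j assume "i < dim_row (1\<^sub>m n :: 'a mat)" "j < dim_col (1\<^sub>m n :: 'a mat)"
    then have ij: "i < n" "j < n" by auto
    show "(rowrep n p b' * rowrep n p b)$$(i,j) = 1\<^sub>m n $$ (i,j)"
      unfolding rowrep_right[OF rowrep_carrier ij pn] using ij pn bp1 by (auto simp: rowrep_def b'_def)
  qed auto
  have gb: "rowrep n p b \<in> borel n"
    using hh(2) bp1 unfolding borel_def by (auto simp: rowrep_def b_def)
  have "hi * As k = (hi * h) * (A * hi)" unfolding hh(5) using hc hic Ac by (simp add: assocn mcn)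
  also have "\<dots> = A * hi" using hh(4) Ac hic by simp
  finally have hiX: "hi * As k = A * hi" .
  have AhiZ: "(A*hi)$$(p,j) = 0" if j: "j \<le> q" "j < n" for j
    unfolding mult_ent[OF Ac hic pn j(2)]
  proof (rule sum.neutral, intro ballI)
    fix l assume l: "l \<in> {..<n}"
    show "A$$(p,l) * hi$$(l,j) = 0"
    proof (cases "l \<le> j")
      case True
      have "A$$(p,l) = 0"
      proof (cases "inR p")
        case True then show ?thesis using shpD(1)[OF shpA pn, of l] l tg \<open>l \<le> j\<close> j by auto
      next
        case False then show ?thesis using shpD(3)[OF shpA pn, of l] l by auto
      qed
      then show ?thesis by simp
    next
      case False then show ?thesis using hh(2) l j unfolding borel_def by auto
    qed
  qed
  have gX: "(rowrep n p b * As k)$$(i,j) = (if i = p then (A*hi)$$(p,j) / hi$$(p,p) else As k$$(i,j))"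
    if ij: "i < n" "j < n" for i j
  proof -
    have "(\<Sum>l<n. b l * As k $$ (l,j)) = (\<Sum>l<n. hi$$(p,l) * As k $$ (l,j)) / hi$$(p,p)"
      unfolding b_def sum_divide_distrib by (intro sum.cong) auto
    also have "\<dots> = (A*hi)$$(p,j) / hi$$(p,p)"
      unfolding hiX[symmetric] mult_ent[OF hic Xc pn ij(2)] ..
    finally show ?thesis unfolding rowrep_left[OF Xc ij] by simp
  qed
  have gXc: "rowrep n p b * As k \<in> carrier_mat n n" by (rule mcn[OF rowrep_carrier Xc])
  have Yent: "(rowrep n p b * As k * rowrep n p b')$$(i,j) =
     (rowrep n p b * As k)$$(i,p) * b' j + (if j = p then 0 else (rowrep n p b * As k)$$(i,j))"
    if ij: "i < n" "j < n" for i j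
    by (rule rowrep_right[OF gXc ij pn])
  have Ypj: "(rowrep n p b * As k * rowrep n p b')$$(p,j) = 0" if j: "j \<le> q" "j < n" for j
    unfolding Yent[OF pn j(2)] gX[OF pn pn] gX[OF pn j(2)] using AhiZ[OF j] AhiZ[of p] pqn pn by auto
  have Yij: "(rowrep n p b * As k * rowrep n p b')$$(i,j) = As k $$ (i,j)" if ij: "p < i" "i < n" "j < n" for i j
  proof -
    have "As k $$ (i,p) = 0" using Xsu ij pn unfolding su_def by auto
    then show ?thesis unfolding Yent[OF ij(2,3)] gX[OF ij(2) pn] gX[OF ij(2,3)] using ij by auto
  qed
  have Z0: "As k $$ (p,j) = 0" if j: "p < j" "j < q" for j
  proof -
    obtain m where m: "m < k" "bp!m = (p,j)" using in_before[OF k pq j(1)] j pqn by auto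
    have "patok (As k) (p,j)" using Inv_I3[OF I m(1)] m(2) by simp
    then show ?thesis using tg j unfolding patok_def by auto
  qed
  have ag: "agreeS k (rowrep n p b * As k * rowrep n p b') (As k)" unfolding agreeS_def
  proof (intro allI impI)
    fix m assume m: "m < k"
    obtain i j where ij: "bp!m = (i,j)" by (cases "bp!m") auto
    note bb = before_props[OF k pq m ij]
    have "(rowrep n p b * As k * rowrep n p b')$$(i,j) = As k $$ (i,j)"
    proof (cases "p < i")
      case True then show ?thesis using Yij bb by auto
    next
      case False
      then have "i = p" "j < q" using bb by auto
      then show ?thesis using Ypj[of j] Z0[of j] bb by auto
    qed
    then show "(rowrep n p b * As k * rowrep n p b') $$ (bp ! m) = As k $$ (bp ! m)" using ij by simp
  qed
  have "rowrep n p b \<in> Gs k" by (rule Inv_I2a[OF I gb rowrep_carrier inv1 inv2 ag])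
  then have "sim_by n (Gs k) (As k) (rowrep n p b * As k * rowrep n p b')"
    unfolding sim_by_def using inv1 inv2 rowrep_carrier[of n p b'] by blast
  moreover have "(rowrep n p b * As k * rowrep n p b')$$(p,q) = 0" using Ypj[of q] pqn by auto
  ultimately show ?thesis unfolding V_def by force
qed

lemma V4:
  assumes I: "Inv k" and k: "k < length bp" and pq: "bp!k = (p,q)"
    and R: "inR p" and qs: "q = sg p"
  shows "0 \<notin> V k p q"
proof
  assume "0 \<in> V k p q"
  then obtain Y where Y: "0 = Y $$ (p,q)" "sim_by n (Gs k) (As k) Y" unfolding V_def by blast
  then obtain g gi where g: "g \<in> Gs k" "gi \<in> carrier_mat n n" "g*gi = 1\<^sub>m n" "gi*g = 1\<^sub>m n" "Y = g * As k * gi"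
    unfolding sim_by_def by blast
  have gb: "g \<in> borel n" by (rule Inv_I2b(1)[OF I g(1)])
  have gib: "gi \<in> borel n" by (rule inv_borel[OF gb g(2) g(4)])
  have gc: "g \<in> carrier_mat n n" using gb borel_carrier by auto
  have agY: "agreeS k Y (As k)" using Inv_I2b(2)[OF I g(1-4)] g(5) by simp
  obtain h hi where hh: "h \<in> borel n" "hi \<in> borel n" "h*hi = 1\<^sub>m n" "hi*h = 1\<^sub>m n" "As k = h*A*hi"
    using Inv_I1[OF I] by blast
  have hc: "h \<in> carrier_mat n n" and hic: "hi \<in> carrier_mat n n" using hh borel_carrier by auto
  have Ac: "A \<in> carrier_mat n n" by (rule shp_carrier[OF shpA])
  have Xc: "As k \<in> carrier_mat n n" and Xsu: "su n (As k)" using Inv_su[OF I] by auto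
  have pqn: "p < q" "q < n" using pos_props[OF k pq] .
  have pn: "p < n" using pqn by auto
  define H where "H = g * h"
  have Hb: "H \<in> borel n" unfolding H_def by (rule borel_mult[OF gb hh(1)])
  have Hc: "H \<in> carrier_mat n n" using Hb borel_carrier by auto
  have Yc: "Y \<in> carrier_mat n n" using g(5) gc Xc g(2) by simp
  have Ysu: "su n Y" unfolding g(5) by (rule conj_su[OF gb gib Xsu])
  have "Y * H = g * (h * (A * (hi * ((gi * g) * h))))" unfolding g(5) hh(5) H_def
    using gc g(2) hc hic Ac by (simp add: assocn mcn)
  also have "\<dots> = g * (h * A)" using g(4) hh(4) hc Ac by simp
  also have "\<dots> = H * A" unfolding H_def using gc hc Ac by (simp add: assocn mcn)
  finally have YH: "Y * H = H * A" .
  have Yrow: "Y$$(p,j) = 0" if j: "j \<le> q" "j < n" for j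
  proof -
    consider "j \<le> p" | "p < j \<and> j < q" | "j = q" using j by linarith
    then show ?thesis
    proof cases
      case 1 then show ?thesis using Ysu pn j unfolding su_def by auto
    next
      case 2
      obtain m where m: "m < k" "bp!m = (p,j)" using in_before[OF k pq, of p j] 2 pqn by auto
      have "patok (As k) (p,j)" using Inv_I3[OF I m(1)] m(2) by simp
      then have "As k $$ (p,j) = 0" using R qs 2 unfolding patok_def by auto
      moreover have "Y $$ (p,j) = As k $$ (p,j)" using agY m unfolding agreeS_def by metis
      ultimately show ?thesis by simp
    next
      case 3 then show ?thesis using Y(1) by simp
    qed
  qed
  have z: "(\<Sum>l<n. H$$(p,l) * A$$(l,j)) = 0" if j: "j < Suc q" "j < n" for j
  proof -
    have "(\<Sum>l<n. H$$(p,l) * A$$(l,j)) = (H*A)$$(p,j)" using mult_ent[OF Hc Ac pn j(2)] by simp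
    also have "\<dots> = (Y*H)$$(p,j)" using YH by simp
    also have "\<dots> = (\<Sum>l<n. Y$$(p,l) * H$$(l,j))" by (rule mult_ent[OF Yc Hc pn j(2)])
    also have "\<dots> = 0"
    proof (rule sum.neutral, intro ballI)
      fix l assume l: "l \<in> {..<n}"
      show "Y$$(p,l) * H$$(l,j) = 0"
      proof (cases "l \<le> q")
        case True then show ?thesis using Yrow l by auto
      next
        case False then show ?thesis using Hb l j unfolding borel_def by auto
      qed
    qed
    finally show ?thesis .
  qed
  have "H$$(p,p) = 0" by (rule LEAD[OF shpA, of "Suc q" "\<lambda>l. H$$(p,l)" p]) (use z pn R qs in auto)
  then show False using Hb pn unfolding borel_def by auto
qed


lemma rowzero:
  assumes I: "Inv k" and k: "k < length bp" and pq: "bp!k = (p,q)"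
    and tg: "\<not> inR p \<or> q \<le> sg p" and j: "p < j" "j < q"
  shows "As k $$ (p,j) = 0"
proof -
  have pqn: "p < q" "q < n" using pos_props[OF k pq] .
  obtain m where m: "m < k" "bp!m = (p,j)" using in_before[OF k pq, of p j] j pqn by auto
  have "patok (As k) (p,j)" using Inv_I3[OF I m(1)] m(2) by simp
  then show ?thesis using tg j unfolding patok_def by auto
qed

lemma patok_cong: "M $$ x = M' $$ x \<Longrightarrow> patok M x = patok M' x"
  unfolding patok_def by simp

lemma Inv_step:
  assumes I: "Inv k" and k: "k < length bp"
  shows "Inv (Suc k)"
proof -
  obtain p q where pq: "bp!k = (p,q)" by (cases "bp!k") auto
  note rs = run_step[OF k pq]
  have pqn: "p < q" "q < n" using pos_props[OF k pq] .
  have Xc: "As k \<in> carrier_mat n n" and Xsu: "su n (As k)" using Inv_su[OF I] by auto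
  have R: "if V k p q = {0} \<or> V k p q = UNIV then sim_by n (Gs k) (As k) (As (Suc k)) \<and> As (Suc k) $$ (p,q) = 0
           else if V k p q = UNIV - {0} then sim_by n (Gs k) (As k) (As (Suc k)) \<and> As (Suc k) $$ (p,q) = 1
           else As (Suc k) = As k"
    using rs(1) unfolding Let_def V_def .
  have "\<exists>g0 gi0. g0 \<in> Gs k \<and> gi0 \<in> carrier_mat n n \<and> g0*gi0 = 1\<^sub>m n \<and> gi0*g0 = 1\<^sub>m n \<and> As (Suc k) = g0 * As k * gi0"
  proof -
    have "sim_by n (Gs k) (As k) (As (Suc k)) \<or> As (Suc k) = As k" using R by (auto split: if_splits)
    then show ?thesis
    proof
      assume "sim_by n (Gs k) (As k) (As (Suc k))" then show ?thesis unfolding sim_by_def by blast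
    next
      assume e: "As (Suc k) = As k"
      show ?thesis by (rule exI[of _ "1\<^sub>m n"], rule exI[of _ "1\<^sub>m n"]) (use one_in_G[OF I] Xc e in auto)
    qed
  qed
  then obtain g0 gi0 where g0: "g0 \<in> Gs k" "gi0 \<in> carrier_mat n n" "g0*gi0 = 1\<^sub>m n" "gi0*g0 = 1\<^sub>m n"
    "As (Suc k) = g0 * As k * gi0" by blast
  have g0b: "g0 \<in> borel n" by (rule Inv_I2b(1)[OF I g0(1)])
  have gi0b: "gi0 \<in> borel n" by (rule inv_borel[OF g0b g0(2) g0(4)])
  have g0c: "g0 \<in> carrier_mat n n" using g0b borel_carrier by auto
  have agX'X: "agreeS k (As (Suc k)) (As k)" using Inv_I2b(2)[OF I g0(1-4)] g0(5) by simp
  obtain h hi where hh: "h \<in> borel n" "hi \<in> borel n" "h*hi = 1\<^sub>m n" "hi*h = 1\<^sub>m n" "As k = h*A*hi"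
    using Inv_I1[OF I] by blast
  have hc: "h \<in> carrier_mat n n" and hic: "hi \<in> carrier_mat n n" using hh borel_carrier by auto
  have Ac: "A \<in> carrier_mat n n" by (rule shp_carrier[OF shpA])
  have I1': "\<exists>h hi. h \<in> borel n \<and> hi \<in> borel n \<and> h*hi = 1\<^sub>m n \<and> hi*h = 1\<^sub>m n \<and> As (Suc k) = h*A*hi"
  proof (intro exI conjI)
    show "g0 * h \<in> borel n" by (rule borel_mult[OF g0b hh(1)])
    show "hi * gi0 \<in> borel n" by (rule borel_mult[OF hh(2) gi0b])
    have "g0 * h * (hi * gi0) = g0 * ((h * hi) * gi0)" using g0c hc hic g0(2) by (simp add: assocn mcn)
    then show "g0 * h * (hi * gi0) = 1\<^sub>m n" using hh(3) g0(3) g0(2) by simp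
    have "hi * gi0 * (g0 * h) = hi * ((gi0 * g0) * h)" using g0c hc hic g0(2) by (simp add: assocn mcn)
    then show "hi * gi0 * (g0 * h) = 1\<^sub>m n" using hh(4) g0(4) hc by simp
    show "As (Suc k) = g0 * h * A * (hi * gi0)" unfolding g0(5) hh(5)
      using g0c hc hic g0(2) Ac by (simp add: assocn mcn)
  qed
  have X'su: "su n (As (Suc k))" unfolding g0(5) by (rule conj_su[OF g0b gi0b Xsu])
  have I2b': "\<forall>g\<in>Gs (Suc k). g \<in> borel n \<and> (\<forall>gi \<in> carrier_mat n n. g*gi = 1\<^sub>m n \<longrightarrow> gi*g = 1\<^sub>m n \<longrightarrow>
        agreeS (Suc k) (g * As (Suc k) * gi) (As (Suc k)))"
  proof (intro ballI conjI impI)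
    fix g assume g: "g \<in> Gs (Suc k)"
    then have gk: "g \<in> Gs k" and ex: "\<exists>gi \<in> carrier_mat n n. g*gi = 1\<^sub>m n \<and> gi*g = 1\<^sub>m n \<and>
        agreeS (Suc k) (g * As (Suc k) * gi) (As (Suc k))" using rs(2) by auto
    show gb: "g \<in> borel n" by (rule Inv_I2b(1)[OF I gk])
    fix gi assume gi: "gi \<in> carrier_mat n n" "g*gi = 1\<^sub>m n" "gi*g = 1\<^sub>m n"
    obtain gi1 where gi1: "gi1 \<in> carrier_mat n n" "g*gi1 = 1\<^sub>m n" "agreeS (Suc k) (g * As (Suc k) * gi1) (As (Suc k))"
      using ex by blast
    have "gi = gi1" by (rule inv_unique[OF borel_carrier[OF gb] gi1(1) gi(1) gi1(2) gi(3)])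
    then show "agreeS (Suc k) (g * As (Suc k) * gi) (As (Suc k))" using gi1 by simp
  qed
  have I2a': "\<forall>g gi. g \<in> borel n \<longrightarrow> gi \<in> carrier_mat n n \<longrightarrow> g*gi = 1\<^sub>m n \<longrightarrow> gi*g = 1\<^sub>m n \<longrightarrow>
        agreeS (Suc k) (g * As (Suc k) * gi) (As (Suc k)) \<longrightarrow> g \<in> Gs (Suc k)"
  proof (intro allI impI)
    fix g gi assume gb: "g \<in> borel n" and gi: "gi \<in> carrier_mat n n" and inv: "g*gi = 1\<^sub>m n" "gi*g = 1\<^sub>m n"
      and ag: "agreeS (Suc k) (g * As (Suc k) * gi) (As (Suc k))"
    have gib: "gi \<in> borel n" by (rule inv_borel[OF gb gi inv(2)])
    have agk: "agreeS k (g * As k * gi) (As k)" unfolding agreeS_def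
    proof (intro allI impI)
      fix m assume m: "m < k"
      obtain i j where ij: "bp!m = (i,j)" by (cases "bp!m") auto
      note bb = before_props[OF k pq m ij]
      have agr: "As k $$ (l,m') = As (Suc k) $$ (l,m')"
        if lm: "l < m'" "m' < n" "l > p \<or> (l = p \<and> m' < q)" for l m'
      proof -
        obtain m'' where "m'' < k" "bp!m'' = (l,m')" using in_before[OF k pq lm] by auto
        then show ?thesis using agX'X unfolding agreeS_def by metis
      qed
      have "(g * As k * gi)$$(i,j) = (g * As (Suc k) * gi)$$(i,j)"
        by (rule L1[OF borel_ut[OF gb] borel_ut[OF gib] Xsu X'su agr]) (use bb pqn in auto)
      also have "\<dots> = As (Suc k) $$ (i,j)" using ag m ij unfolding agreeS_def
        by (metis less_SucI)
      also have "\<dots> = As k $$ (i,j)" using agX'X m ij unfolding agreeS_def by metis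
      finally show "(g * As k * gi) $$ (bp ! m) = As k $$ (bp ! m)" using ij by simp
    qed
    have "g \<in> Gs k" by (rule Inv_I2a[OF I gb gi inv agk])
    then show "g \<in> Gs (Suc k)" using rs(2) gi inv ag by blast
  qed
  have main: "patok (As (Suc k)) (p,q)"
  proof -
    consider (t0) "\<not> inR p \<or> q < sg p" | (t1) "inR p \<and> q = sg p" | (fr) "inR p \<and> sg p < q"
      by (metis linorder_neqE_nat)
    then show ?thesis
    proof cases
      case t0
      have z: "As k $$ (p,j) = 0" if "p < j" "j < q" for j
        by (rule rowzero[OF I k pq _ that]) (use t0 in auto)
      have V0: "0 \<in> V k p q" by (rule V3[OF I k pq t0])
      have "V k p q = {0} \<or> V k p q = UNIV"
      proof (cases "\<exists>v\<in>V k p q. v \<noteq> 0")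
        case True
        then obtain v where v: "v \<in> V k p q" "v \<noteq> 0" by blast
        have "t \<in> V k p q" for t :: 'a
        proof (cases "t = 0")
          case True then show ?thesis using V0 by simp
        next
          case False
          have "(t / v) * v \<in> V k p q" by (rule V2[OF I k pq z v(1)]) (use False v in auto)
          then show ?thesis using v(2) by simp
        qed
        then have "V k p q = UNIV" by auto
        then show ?thesis by simp
      next
        case False
        then show ?thesis using V0 by blast
      qed
      then have "As (Suc k) $$ (p,q) = 0" using R by simp
      then show ?thesis unfolding patok_def using t0 by auto
    next
      case t1
      have z: "As k $$ (p,j) = 0" if "p < j" "j < q" for j
        by (rule rowzero[OF I k pq _ that]) (use t1 in auto)
      have n0: "0 \<notin> V k p q" by (rule V4[OF I k pq]) (use t1 in auto)
      have v0: "As k $$ (p,q) \<in> V k p q" by (rule V1[OF I])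
      have v0n: "As k $$ (p,q) \<noteq> 0" using v0 n0 by auto
      have VV: "V k p q = UNIV - {0}"
      proof (intro equalityI subsetI)
        fix t :: 'a
        assume "t \<in> V k p q" then show "t \<in> UNIV - {0}" using n0 by auto
      next
        fix t :: 'a
        assume "t \<in> UNIV - {0}"
        then have t: "t \<noteq> 0" by simp
        have "(t / As k $$ (p,q)) * As k $$ (p,q) \<in> V k p q"
          by (rule V2[OF I k pq z v0]) (use t v0n in auto)
        then show "t \<in> V k p q" using v0n by simp
      qed
      have "\<not> (V k p q = {0} \<or> V k p q = UNIV)" using n0 by auto
      then have "As (Suc k) $$ (p,q) = 1" using R VV by simp
      then show ?thesis unfolding patok_def using t1 by auto
    next
      case fr
      then show ?thesis unfolding patok_def by auto
    qed
  qed
  have I3': "\<forall>m<Suc k. patok (As (Suc k)) (bp!m)"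
  proof (intro allI impI)
    fix m assume m: "m < Suc k"
    show "patok (As (Suc k)) (bp!m)"
    proof (cases "m < k")
      case True
      have "As (Suc k) $$ (bp!m) = As k $$ (bp!m)" using agX'X True unfolding agreeS_def by blast
      then show ?thesis using patok_cong Inv_I3[OF I True] by metis
    next
      case False
      then have "m = k" using m by auto
      then show ?thesis using main pq by simp
    qed
  qed
  show ?thesis unfolding Inv_def using I1' I2a' I2b' I3' by blast
qed

lemma Inv_all: "k \<le> length bp \<Longrightarrow> Inv k"
proof (induction k)
  case 0 show ?case by (simp add: Inv0)
next
  case (Suc k) then show ?case using Inv_step by auto
qed

lemma final_shp: "shp (As (length bp))"
proof -
  have I: "Inv (length bp)" by (rule Inv_all) simp
  show ?thesis
  proof (rule su_patok_shp[OF Inv_su(1)[OF I]])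
    fix i j assume ij: "i < j" "j < n"
    then have "(i,j) \<in> set bp" using bp_set[of n] by auto
    then obtain m where m: "m < length bp" "bp!m = (i,j)" by (auto simp: in_set_conv_nth)
    show "patok (As (length bp)) (i,j)" using Inv_I3[OF I m(1)] m(2) by simp
  qed
qed

lemma final_conj: "\<exists>h hi. h \<in> borel n \<and> hi \<in> borel n \<and> h*hi = 1\<^sub>m n \<and> hi*h = 1\<^sub>m n \<and> As (length bp) = h*A*hi"
  by (rule Inv_I1[OF Inv_all]) simp

end

context qs begin

lemma Tpat:
  assumes X: "shp X" and Y: "shp Y" and Hb: "H \<in> borel n" and YH: "Y * H = H * X"
    and pq: "p < q" "q < n" and nz: "H$$(p,q) \<noteq> 0"
  shows "Tok p q"
proof (cases "inR q")
  case False then show ?thesis by (simp add: Tok_def)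
next
  case Rq: True
  have pn: "p < n" using pq by auto
  have Hc: "H \<in> carrier_mat n n" using Hb borel_carrier by auto
  have Xc: "X \<in> carrier_mat n n" and Yc: "Y \<in> carrier_mat n n" using X Y shp_carrier by auto
  have row: "(\<Sum>l<n. H$$(p,l) * X$$(l,j)) = (\<Sum>l<n. Y$$(p,l) * H$$(l,j))" if j: "j < n" for j
    using mult_ent[OF Hc Xc pn j] mult_ent[OF Yc Hc pn j] YH by simp
  show ?thesis
  proof (cases "inR p")
    case False
    have z: "(\<Sum>l<n. H$$(p,l) * X$$(l,j)) = 0" if j: "j < n" for j
      unfolding row[OF j] using shpD(3)[OF Y pn _ False] by (auto intro!: sum.neutral)
    have "H$$(p,q) = 0" by (rule LEAD[OF X, of n "\<lambda>l. H$$(p,l)" q]) (use z pq Rq sg_props in auto)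
    then show ?thesis using nz by simp
  next
    case Rp: True
    have z: "(\<Sum>l<n. H$$(p,l) * X$$(l,j)) = 0" if j: "j < sg p" "j < n" for j
      unfolding row[OF j(2)]
    proof (rule sum.neutral, intro ballI)
      fix l assume l: "l \<in> {..<n}"
      show "Y$$(p,l) * H$$(l,j) = 0"
      proof (cases "l < sg p")
        case True then show ?thesis using shpD(1)[OF Y pn _ Rp] l by auto
      next
        case False then show ?thesis using Hb l j unfolding borel_def by auto
      qed
    qed
    have a: "\<not> sg q < sg p"
    proof
      assume "sg q < sg p"
      then have "H$$(p,q) = 0" by (intro LEAD[OF X, of "sg p" "\<lambda>l. H$$(p,l)" q]) (use z pq Rq in auto)
      then show False using nz by simp
    qed
    have b: "sg q \<noteq> sg p" using sg_inj[of q p] pq Rq Rp by auto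
    show ?thesis unfolding Tok_def using a b Rp Rq by auto
  qed
qed

end

theorem theorem2p16:
  fixes Q A Ainf :: "'a::field mat" and n :: nat
  assumes "Q \<in> strict_upper n" and "subpermutation n Q"
    and "A \<in> QU n Q"
    and "belitskii_form n A Ainf"
  shows "Ainf \<in> QU n Q \<and>
    (\<exists>ops :: (nat \<times> nat \<times> 'a) list. \<exists>As :: nat \<Rightarrow> 'a mat.
       (\<forall>k < length ops. let (p,q,c) = ops ! k in p < q \<and> q < n \<and> As (Suc k) = elem_op n p q c (As k))
     \<and> As 0 = A
     \<and> (\<forall>k \<le> length ops. As k \<in> QU n Q)
     \<and> (\<exists>D \<in> diag_inv n. \<exists>Di \<in> carrier_mat n n. D * Di = 1\<^sub>m n \<and> Di * D = 1\<^sub>m n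
           \<and> As (length ops) = D * Ainf * Di))"
proof -
  interpret qs n Q by unfold_locales (rule assms(1), rule assms(2))
  have shpA: "shp A" using assms(3) QU_iff by auto
  obtain As Gs where run: "belitskii_run n A As Gs" and Ainf: "Ainf = As (length (belitskii_positions n))"
    using assms(4) unfolding belitskii_form_def by blast
  interpret brun n Q A As Gs by unfold_locales (rule shpA, rule run)
  have shpI: "shp Ainf" using final_shp Ainf by simp
  obtain h hi where hh: "h \<in> borel n" "hi \<in> borel n" "h*hi = 1\<^sub>m n" "hi*h = 1\<^sub>m n" "Ainf = h*A*hi"
    using final_conj Ainf by auto
  have hc: "h \<in> carrier_mat n n" and hic: "hi \<in> carrier_mat n n" using hh borel_carrier by auto
  have Ac: "A \<in> carrier_mat n n" by (rule shp_carrier[OF shpA])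
  have Ic: "Ainf \<in> carrier_mat n n" by (rule shp_carrier[OF shpI])
  have "Ainf * h = h * (A * (hi * h))" unfolding hh(5) using hc hic Ac by (simp add: assocn mcn)
  then have AinfH: "Ainf * h = h * A" using hh(4) Ac by simp
  have hpp: "h$$(i,i) \<noteq> 0" if "i < n" for i using hh(1) that unfolding borel_def by auto
  define D where "D = diagm n (\<lambda>i. h$$(i,i))"
  define Di where "Di = diagm n (\<lambda>i. inverse (h$$(i,i)))"
  define u where "u = Di * h"
  define ui where "ui = hi * D"
  have Dc: "D \<in> carrier_mat n n" and Dic: "Di \<in> carrier_mat n n" by (auto simp: D_def Di_def)
  have uc: "u \<in> carrier_mat n n" and uic: "ui \<in> carrier_mat n n" using Dc Dic hc hic by (auto simp: u_def ui_def)
  have uent: "u$$(i,j) = inverse (h$$(i,i)) * h$$(i,j)" if "i < n" "j < n" for i j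
    unfolding u_def Di_def by (rule diagm_left[OF hc that])
  have uu: "u \<in> unitri n" unfolding unitri_def
    using uc uent hh(1) hpp unfolding borel_def by auto
  have uT: "Tok p q" if "p < q" "q < n" "u$$(p,q) \<noteq> 0" for p q
  proof -
    have "h$$(p,q) \<noteq> 0" using that uent[of p q] by auto
    then show ?thesis by (rule Tpat[OF shpA shpI hh(1) AinfH that(1,2)])
  qed
  obtain ops As' where P: "opsok ops As'" "As' 0 = A" "\<forall>k \<le> length ops. shp (As' k)"
    "As' (length ops) * u = u * A"
    using PL[OF uu uT shpA] by blast
  have DDi: "D * Di = 1\<^sub>m n" unfolding D_def Di_def diagm_mult
    by (rule eq_matI) (auto simp: diagm_def hpp)
  have DiD: "Di * D = 1\<^sub>m n" unfolding D_def Di_def diagm_mult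
    by (rule eq_matI) (auto simp: diagm_def hpp)
  have "u * ui = Di * ((h * hi) * D)" unfolding u_def ui_def using Dic hc hic Dc by (simp add: assocn mcn)
  then have uui: "u * ui = 1\<^sub>m n" using hh(3) Dc DiD by simp
  have "(Di * Ainf * D) * u = Di * (Ainf * ((D * Di) * h))" unfolding u_def
    using Dic Ic Dc hc by (simp add: assocn mcn)
  also have "\<dots> = Di * (h * A)" using DDi hc AinfH by simp
  also have "\<dots> = u * A" unfolding u_def using Dic hc Ac by (simp add: assocn mcn)
  finally have Zu: "(Di * Ainf * D) * u = u * A" .
  have Lc: "As' (length ops) \<in> carrier_mat n n" using P(3) shp_carrier by auto
  have Zc: "Di * Ainf * D \<in> carrier_mat n n" using Dic Ic Dc by simp
  have "As' (length ops) = As' (length ops) * (u * ui)" using uui Lc by simp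
  also have "\<dots> = (As' (length ops) * u) * ui" using Lc uc uic by (simp add: assocn mcn)
  also have "\<dots> = ((Di * Ainf * D) * u) * ui" using P(4) Zu by simp
  also have "\<dots> = (Di * Ainf * D) * (u * ui)" using Zc uc uic by (simp only: assocn)
  also have "\<dots> = Di * Ainf * D" using uui right_mult_one_mat[OF Zc] by simp
  finally have fin: "As' (length ops) = Di * Ainf * D" .
  have Did: "Di \<in> diag_inv n" unfolding diag_inv_def using Dic hpp by (auto simp: Di_def diagm_def)
  show ?thesis
  proof (intro conjI exI)
    show "Ainf \<in> QU n Q" using shpI QU_iff by auto
    show "\<forall>k < length ops. let (p,q,c) = ops ! k in p < q \<and> q < n \<and> As' (Suc k) = elem_op n p q c (As' k)"
      using P(1) unfolding opsok_def .
    show "As' 0 = A" by (rule P(2))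
    show "\<forall>k \<le> length ops. As' k \<in> QU n Q" using P(3) QU_iff by auto
    show "\<exists>D \<in> diag_inv n. \<exists>Di \<in> carrier_mat n n. D * Di = 1\<^sub>m n \<and> Di * D = 1\<^sub>m n
           \<and> As' (length ops) = D * Ainf * Di"
      using Did Dc DiD DDi fin by blast
  qed
qed



end
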